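(* Let $r\ge 2$ and $g,h\ge 0$ be integers with $g+h\ge 1$. Then the graph $gK_{r+1}\cup h(K_{r+1,r+1}\setminus F)$ is determined by its $Q$-spectrum (DQS). In particular, $K_{r+1}$ and $K_{r+1,r+1}\setminus F$ are DQS.
   Context: All graphs are finite, simple and undirected. $Q(G)=D(G)+A(G)$ is the signless Laplacian matrix (degree diagonal matrix plus adjacency matrix), and $\mathrm{Spec}_Q(G)$ is the multiset of its eigenvalues. A graph $G$ is DQS if every graph $H$ with $\mathrm{Spec}_Q(H)=\mathrm{Spec}_Q(G)$ is isomorphic to $G$. $K_{r+1,r+1}\setminus F$ denotes the graph obtained from $K_{r+1,r+1}$ by deleting the edges of a perfect matching $F$; $kH$ is the disjoint union of $k$ copies of $H$ and $\cup$ is disjoint union. *)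

theory Defs
  imports "Jordan_Normal_Form.Char_Poly" "HOL-Computational_Algebra.Polynomial"
begin

text \<open>A finite simple graph with n vertices is represented on the vertex set {0..<n}
  by a pair (n, E) with an edge relation E; only E restricted to {0..<n} matters.\<close>

type_synonym graph = "nat \<times> (nat \<Rightarrow> nat \<Rightarrow> bool)"

definition nverts :: "graph \<Rightarrow> nat" where "nverts G = fst G"
definition adj :: "graph \<Rightarrow> nat \<Rightarrow> nat \<Rightarrow> bool" where "adj G = snd G"

definition simple_graph :: "graph \<Rightarrow> bool" where
  "simple_graph G \<longleftrightarrow>
     (\<forall>i j. adj G i j \<longrightarrow> i < nverts G \<and> j < nverts G) \<and>
     (\<forall>i. \<not> adj G i i) \<and> (\<forall>i j. adj G i j \<longrightarrow> adj G j i)"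

definition degree :: "graph \<Rightarrow> nat \<Rightarrow> nat" where
  "degree G i = card {j. j < nverts G \<and> adj G i j}"

definition signless_laplacian :: "graph \<Rightarrow> complex mat" where
  "signless_laplacian G = mat (nverts G) (nverts G)
     (\<lambda>(i, j). (if i = j then of_nat (degree G i) else 0) + (if adj G i j then 1 else 0))"

definition spec_Q :: "graph \<Rightarrow> complex multiset" where
  "spec_Q G = proots (char_poly (signless_laplacian G))"

definition isomorphic :: "graph \<Rightarrow> graph \<Rightarrow> bool" where
  "isomorphic G H \<longleftrightarrow> (\<exists>f. bij_betw f {0..<nverts G} {0..<nverts H} \<and>
     (\<forall>i<nverts G. \<forall>j<nverts G. adj G i j \<longleftrightarrow> adj H (f i) (f j)))"

definition DQS :: "graph \<Rightarrow> bool" where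
  "DQS G \<longleftrightarrow> (\<forall>H. simple_graph H \<longrightarrow> spec_Q H = spec_Q G \<longrightarrow> isomorphic H G)"

definition disjoint_union :: "graph \<Rightarrow> graph \<Rightarrow> graph" where
  "disjoint_union G H = (nverts G + nverts H,
     \<lambda>i j. (i < nverts G \<and> j < nverts G \<and> adj G i j) \<or>
           (nverts G \<le> i \<and> nverts G \<le> j \<and> adj H (i - nverts G) (j - nverts G)))"

definition empty_graph :: graph where "empty_graph = (0, \<lambda>_ _. False)"

fun copies :: "nat \<Rightarrow> graph \<Rightarrow> graph" where
  "copies 0 H = empty_graph"
| "copies (Suc k) H = disjoint_union (copies k H) H"

definition complete_graph :: "nat \<Rightarrow> graph" where
  "complete_graph n = (n, \<lambda>i j. i < n \<and> j < n \<and> i \<noteq> j)"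

text \<open>K_{m,m} minus the perfect matching F = {(i, m+i) | i<m}: sides {0..<m}
  and {m..<2m}; i and m+j adjacent iff i \<noteq> j.  (All perfect matchings give
  isomorphic graphs.)\<close>
definition crown_graph :: "nat \<Rightarrow> graph" where
  "crown_graph m = (2 * m, \<lambda>i j. i < 2 * m \<and> j < 2 * m \<and>
      ((i < m \<and> m \<le> j \<and> j - m \<noteq> i) \<or> (j < m \<and> m \<le> i \<and> i - m \<noteq> j)))"

end

theory Submission
  imports Defs "Jordan_Normal_Form.Schur_Decomposition"
begin

lemma sum_single:
  assumes "finite A" "i \<in> A" "\<And>k. k \<in> A \<Longrightarrow> k \<noteq> i \<Longrightarrow> g k = (0::'b::comm_monoid_add)"
  shows "sum g A = g i"
proof -
  have "sum g A = g i + sum g (A - {i})" using assms by (simp add: sum.remove)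
  also have "sum g (A - {i}) = 0" using assms by (intro sum.neutral) auto
  finally show ?thesis by simp
qed

definition tr :: "complex mat \<Rightarrow> complex" where
  "tr M = (\<Sum>i<dim_row M. M $$ (i,i))"

definition pf :: "complex mat \<Rightarrow> nat \<Rightarrow> complex list \<Rightarrow> complex mat" where
  "pf A n as = foldr (\<lambda>a M. (A - a \<cdot>\<^sub>m 1\<^sub>m n) * M) as (1\<^sub>m n)"

lemma pf_Nil[simp]: "pf A n [] = 1\<^sub>m n" by (simp add: pf_def)
lemma pf_Cons[simp]: "pf A n (a#as) = (A - a \<cdot>\<^sub>m 1\<^sub>m n) * pf A n as" by (simp add: pf_def)

lemma pf_carrier: "A \<in> carrier_mat n n \<Longrightarrow> pf A n as \<in> carrier_mat n n"
  by (induction as) auto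

lemma pf_append: "A \<in> carrier_mat n n \<Longrightarrow> pf A n (as @ bs) = pf A n as * pf A n bs"
proof (induction as)
  case Nil then show ?case using left_mult_one_mat[OF pf_carrier[OF Nil]] by simp
next
  case (Cons a as)
  have "pf A n ((a#as) @ bs) = (A - a \<cdot>\<^sub>m 1\<^sub>m n) * (pf A n as * pf A n bs)" using Cons by simp
  also have "\<dots> = ((A - a \<cdot>\<^sub>m 1\<^sub>m n) * pf A n as) * pf A n bs"
    by (rule assoc_mult_mat[symmetric, of _ n n _ n _ n], insert Cons.prems pf_carrier[OF Cons.prems], auto)
  finally show ?case by simp
qed

lemma tr_mult_comm: assumes "X \<in> carrier_mat n k" "Y \<in> carrier_mat k n"
  shows "tr (X * Y) = tr (Y * X)"
proof -
  have "tr (X * Y) = (\<Sum>i<n. \<Sum>j<k. X $$ (i,j) * Y $$ (j,i))"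
    using assms by (simp add: tr_def scalar_prod_def row_def col_def atLeast0LessThan)
  also have "\<dots> = (\<Sum>j<k. \<Sum>i<n. Y $$ (j,i) * X $$ (i,j))"
    by (subst sum.swap) (simp add: mult.commute)
  also have "\<dots> = tr (Y * X)"
    using assms by (simp add: tr_def scalar_prod_def row_def col_def atLeast0LessThan)
  finally show ?thesis .
qed

lemma upper_tri_mult:
  assumes X: "X \<in> carrier_mat n n" and Y: "Y \<in> carrier_mat n n"
    and ux: "upper_triangular X" and uy: "upper_triangular Y"
  shows "upper_triangular (X * Y)" "\<And>i. i < n \<Longrightarrow> (X * Y) $$ (i,i) = X $$ (i,i) * Y $$ (i,i)"
proof -
  show "upper_triangular (X * Y)"
  proof (rule upper_triangularI)
    fix i j assume ji: "j < i" and i: "i < dim_row (X * Y)"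
    have "(X * Y) $$ (i,j) = (\<Sum>k<n. X $$ (i,k) * Y $$ (k,j))"
      using X Y i ji by (simp add: scalar_prod_def row_def col_def atLeast0LessThan)
    also have "\<dots> = 0"
    proof (rule sum.neutral, intro ballI)
      fix k assume k: "k \<in> {..<n}"
      show "X $$ (i,k) * Y $$ (k,j) = 0"
      proof (cases "k < i")
        case True then show ?thesis using upper_triangularD[OF ux True] X i by auto
      next
        case False then have jk: "j < k" using ji by auto
        show ?thesis using upper_triangularD[OF uy jk] Y k by auto
      qed
    qed
    finally show "(X * Y) $$ (i,j) = 0" .
  qed
  fix i assume i: "i < n"
  have "(X * Y) $$ (i,i) = (\<Sum>k<n. X $$ (i,k) * Y $$ (k,i))"
    using X Y i by (simp add: scalar_prod_def row_def col_def atLeast0LessThan)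
  also have "\<dots> = X $$ (i,i) * Y $$ (i,i)"
  proof (rule sum_single)
    fix k assume k: "k \<in> {..<n}" "k \<noteq> i"
    show "X $$ (i,k) * Y $$ (k,i) = 0"
    proof (cases "k < i")
      case True then show ?thesis using upper_triangularD[OF ux True] X i by auto
    next
      case False then have ik: "i < k" using k by auto
      show ?thesis using upper_triangularD[OF uy ik] Y k by auto
    qed
  qed (use i in auto)
  finally show "(X * Y) $$ (i,i) = X $$ (i,i) * Y $$ (i,i)" .
qed

lemma pf_upper:
  assumes B: "B \<in> carrier_mat n n" and ub: "upper_triangular B"
  shows "upper_triangular (pf B n as) \<and> (\<forall>i<n. pf B n as $$ (i,i) = (\<Prod>a\<leftarrow>as. B $$ (i,i) - a))"
proof (induction as)
  case Nil then show ?case by auto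
next
  case (Cons a as)
  have c1: "B - a \<cdot>\<^sub>m 1\<^sub>m n \<in> carrier_mat n n" by (simp add: minus_carrier_mat)
  have u1: "upper_triangular (B - a \<cdot>\<^sub>m 1\<^sub>m n)"
    using ub B by (auto simp: upper_triangular_def)
  have d1: "\<And>i. i < n \<Longrightarrow> (B - a \<cdot>\<^sub>m 1\<^sub>m n) $$ (i,i) = B $$ (i,i) - a" using B by auto
  show ?case using upper_tri_mult[OF c1 pf_carrier[OF B] u1] Cons d1 by auto
qed

lemma pf_similar:
  assumes A: "A \<in> carrier_mat n n" and B: "B \<in> carrier_mat n n"
    and P: "P \<in> carrier_mat n n" and Q: "Q \<in> carrier_mat n n"
    and PQ: "P * Q = 1\<^sub>m n" and QP: "Q * P = 1\<^sub>m n" and APBQ: "A = P * B * Q"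
  shows "pf A n as = P * pf B n as * Q"
proof (induction as)
  case Nil then show ?case using PQ P by simp
next
  case (Cons a as)
  have sh: "A - a \<cdot>\<^sub>m 1\<^sub>m n = P * (B - a \<cdot>\<^sub>m 1\<^sub>m n) * Q"
  proof -
    have "P * (B - a \<cdot>\<^sub>m 1\<^sub>m n) = P * B - P * (a \<cdot>\<^sub>m 1\<^sub>m n)"
      using P B by (simp add: mult_minus_distrib_mat)
    also have "P * (a \<cdot>\<^sub>m 1\<^sub>m n) = a \<cdot>\<^sub>m P" using P by (simp add: mult_smult_distrib[OF P one_carrier_mat])
    finally have "P * (B - a \<cdot>\<^sub>m 1\<^sub>m n) * Q = (P * B - a \<cdot>\<^sub>m P) * Q" by simp
    also have "\<dots> = P * B * Q - (a \<cdot>\<^sub>m P) * Q"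
      by (subst minus_mult_distrib_mat[of _ n n]) (use P B Q in auto)
    also have "(a \<cdot>\<^sub>m P) * Q = a \<cdot>\<^sub>m 1\<^sub>m n" using P Q PQ by (simp add: mult_smult_assoc_mat[OF P Q])
    finally show ?thesis using APBQ by simp
  qed
  have cB: "B - a \<cdot>\<^sub>m 1\<^sub>m n \<in> carrier_mat n n" by (simp add: minus_carrier_mat)
  have cpf: "pf B n as \<in> carrier_mat n n" by (rule pf_carrier[OF B])
  have "pf A n (a#as) = (P * (B - a \<cdot>\<^sub>m 1\<^sub>m n) * Q) * (P * pf B n as * Q)"
    using Cons sh by simp
  also have "\<dots> = P * ((B - a \<cdot>\<^sub>m 1\<^sub>m n) * (Q * P) * pf B n as) * Q"
    using P Q cB cpf by (simp add: assoc_mult_mat[of _ n n _ n _ n])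
  also have "\<dots> = P * pf B n (a#as) * Q" using QP cB by simp
  finally show ?case .
qed

lemma tr_pf_spec:
  assumes A: "A \<in> carrier_mat n n"
  shows "tr (pf A n as) = (\<Sum>x\<in>#proots (char_poly A). \<Prod>a\<leftarrow>as. x - a)"
proof -
  obtain es where ces: "char_poly A = (\<Prod>a\<leftarrow>es. [:- a, 1:])" and les: "length es = n"
    using char_poly_factorized[OF A] by blast
  obtain B P Q where sd: "schur_decomposition A es = (B,P,Q)" by (cases "schur_decomposition A es") auto
  from schur_decomposition[OF A ces sd] have sw: "similar_mat_wit A B P Q"
    and ub: "upper_triangular B" and db: "diag_mat B = es" by auto
  from sw A have cs: "B \<in> carrier_mat n n" "P \<in> carrier_mat n n" "Q \<in> carrier_mat n n"
    "P * Q = 1\<^sub>m n" "Q * P = 1\<^sub>m n" "A = P * B * Q"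
    unfolding similar_mat_wit_def Let_def by auto
  have "pf A n as = P * pf B n as * Q" by (rule pf_similar[OF A cs])
  then have "tr (pf A n as) = tr (P * (pf B n as * Q))"
    using cs pf_carrier[OF cs(1)] by (simp add: assoc_mult_mat[of _ n n _ n _ n])
  also have "\<dots> = tr ((pf B n as * Q) * P)"
    by (rule tr_mult_comm[of _ n n], insert cs pf_carrier[OF cs(1), of as], auto intro: mult_carrier_mat)
  also have "\<dots> = tr (pf B n as)"
    using cs pf_carrier[OF cs(1)] right_mult_one_mat[OF pf_carrier[OF cs(1)]] by (simp add: assoc_mult_mat[of _ n n _ n _ n])
  also have "\<dots> = (\<Sum>i<n. \<Prod>a\<leftarrow>as. B $$ (i,i) - a)"
  proof -
    have d: "dim_row (pf B n as) = n" using pf_carrier[OF cs(1), of as] by simp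
    show ?thesis unfolding tr_def d using pf_upper[OF cs(1) ub, of as] by (intro sum.cong) auto
  qed
  also have "\<dots> = (\<Sum>i<n. \<Prod>a\<leftarrow>as. es ! i - a)"
  proof (intro sum.cong refl)
    fix i assume "i \<in> {..<n}"
    then have "es ! i = B $$ (i,i)" using db cs(1) by (auto simp: diag_mat_def)
    then show "(\<Prod>a\<leftarrow>as. B $$ (i,i) - a) = (\<Prod>a\<leftarrow>as. es ! i - a)" by simp
  qed
  also have "\<dots> = (\<Sum>x\<in>#mset es. \<Prod>a\<leftarrow>as. x - a)"
  proof -
    have "(\<Sum>x\<in>#mset es. \<Prod>a\<leftarrow>as. x - a) = sum_list (map (\<lambda>x. \<Prod>a\<leftarrow>as. x - a) es)"
      by (simp add: sum_mset_sum_list flip: mset_map)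
    also have "\<dots> = (\<Sum>i<n. \<Prod>a\<leftarrow>as. es ! i - a)"
      using les by (simp add: sum_list_sum_nth atLeast0LessThan)
    finally show ?thesis by simp
  qed
  also have "mset es = proots (char_poly A)"
  proof -
    have "proots (\<Prod>a\<leftarrow>es. [:- a, 1:]) = mset es"
    proof (induction es)
      case (Cons e es)
      have "(\<Prod>a\<leftarrow>es. [:- a, (1::complex):]) \<noteq> 0" by (auto simp: prod_list_zero_iff)
      then have "proots ([:- e, 1:] * (\<Prod>a\<leftarrow>es. [:- a, 1:])) = proots [:- e, (1::complex):] + proots (\<Prod>a\<leftarrow>es. [:- a, 1:])"
        by (intro proots_mult) auto
      also have "proots [:- e, (1::complex):] = {#e#}" using proots_linear_factor[of "-e"] by simp
      finally show ?case using Cons by simp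
    qed simp
    then show ?thesis using ces by simp
  qed
  finally show ?thesis .
qed


declare pf_Cons[simp del] pf_Nil[simp del]

definition c2 :: "graph \<Rightarrow> nat \<Rightarrow> nat \<Rightarrow> nat" where
  "c2 X i j = card {k. k < nverts X \<and> adj X i k \<and> adj X k j}"

lemma sum_ind: "finite A \<Longrightarrow> (\<Sum>k\<in>A. if P k then (1::'a::semiring_1) else 0) = of_nat (card {k\<in>A. P k})"
  by (simp add: sum.If_cases Int_def conj_commute)

lemma Q_carrier: "signless_laplacian X \<in> carrier_mat (nverts X) (nverts X)"
  by (simp add: signless_laplacian_def)

lemma Q_entry: "i < nverts X \<Longrightarrow> j < nverts X \<Longrightarrow> signless_laplacian X $$ (i,j) =
   (if i = j then of_nat (degree X i) else 0) + (if adj X i j then 1 else 0)"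
  by (simp add: signless_laplacian_def)

lemma mult_entry: "M \<in> carrier_mat n n \<Longrightarrow> N \<in> carrier_mat n n \<Longrightarrow> i < n \<Longrightarrow> j < n \<Longrightarrow>
  (M * N) $$ (i,j) = (\<Sum>k<n. M $$ (i,k) * N $$ (k,j))"
  by (simp add: scalar_prod_def row_def col_def atLeast0LessThan)

lemma sum_delta_r: "j < (n::nat) \<Longrightarrow> (\<Sum>k<n. f k * (if k = j then c else 0)) = f j * (c::complex)"
  by (subst sum_single[of _ j]) auto
lemma sum_delta_l: "j < (n::nat) \<Longrightarrow> (\<Sum>k<n. (if j = k then c else 0) * f k) = c * (f j :: complex)"
  by (subst sum_single[of _ j]) auto

lemma msub_carrier[simp]: "A \<in> carrier_mat n n \<Longrightarrow> A - a \<cdot>\<^sub>m 1\<^sub>m n \<in> carrier_mat n n"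
  by (simp add: minus_carrier_mat)
lemma msub_entry: "(A::complex mat) \<in> carrier_mat n n \<Longrightarrow> i < n \<Longrightarrow> j < n \<Longrightarrow>
   (A - a \<cdot>\<^sub>m 1\<^sub>m n) $$ (i,j) = A $$ (i,j) - (if i = j then a else 0)"
  by simp
lemma msub0: "A \<in> carrier_mat n n \<Longrightarrow> A - (0::complex) \<cdot>\<^sub>m 1\<^sub>m n = A"
  by (rule eq_matI) auto
lemma pf_single: "A \<in> carrier_mat n n \<Longrightarrow> pf A n [a] = A - a \<cdot>\<^sub>m 1\<^sub>m n"
  by (simp add: right_mult_one_mat[OF msub_carrier] pf_Cons pf_Nil)
lemma pf_two: "A \<in> carrier_mat n n \<Longrightarrow> pf A n [a, b] = (A - a \<cdot>\<^sub>m 1\<^sub>m n) * (A - b \<cdot>\<^sub>m 1\<^sub>m n)"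
  by (simp add: pf_single pf_Cons[of A n a "[b]"])

lemma simpleD: assumes "simple_graph X"
  shows "\<And>i j. adj X i j \<Longrightarrow> i < nverts X" "\<And>i j. adj X i j \<Longrightarrow> j < nverts X"
    "\<And>i. \<not> adj X i i" "\<And>i j. adj X i j = adj X j i"
  using assms unfolding simple_graph_def by blast+

lemma tr_pf0: "tr (pf (signless_laplacian X) (nverts X) [0]) = (\<Sum>i<nverts X. of_nat (degree X i))"
  if "simple_graph X"
proof -
  let ?Q = "signless_laplacian X" and ?n = "nverts X"
  have "pf ?Q ?n [0] = ?Q" using Q_carrier[of X] by (simp add: pf_single msub0)
  then show ?thesis using simpleD[OF that] Q_carrier[of X] unfolding tr_def
    by (intro sum.cong) (auto simp: Q_entry)
qed

lemma deg_sum: "simple_graph X \<Longrightarrow> i < nverts X \<Longrightarrow>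
   (\<Sum>k<nverts X. if adj X i k then (1::complex) else 0) = of_nat (degree X i)"
  by (simp add: sum_ind degree_def)

lemma tr_pf00: "tr (pf (signless_laplacian X) (nverts X) [0, 0]) =
      (\<Sum>i<nverts X. of_nat (degree X i) ^ 2 + of_nat (degree X i))"
  if S: "simple_graph X"
proof -
  let ?Q = "signless_laplacian X" and ?n = "nverts X"
  have C: "?Q \<in> carrier_mat ?n ?n" by (rule Q_carrier)
  have "pf ?Q ?n [0,0] = ?Q * ?Q" using C by (simp add: pf_two msub0)
  then have "tr (pf ?Q ?n [0,0]) = (\<Sum>i<?n. (?Q * ?Q) $$ (i,i))" unfolding tr_def using C by simp
  also have "\<dots> = (\<Sum>i<?n. of_nat (degree X i) ^ 2 + of_nat (degree X i))"
  proof (intro sum.cong refl)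
    fix i assume i: "i \<in> {..<?n}"
    have "(?Q * ?Q) $$ (i,i) = (\<Sum>k<?n. ?Q $$ (i,k) * ?Q $$ (k,i))" using i by (intro mult_entry[OF C C]) auto
    also have "\<dots> = (\<Sum>k<?n. (if i = k then of_nat (degree X i) ^ 2 else 0) + (if adj X i k then 1 else 0))"
    proof (intro sum.cong refl)
      fix k assume k: "k \<in> {..<?n}"
      show "?Q $$ (i,k) * ?Q $$ (k,i) = (if i = k then of_nat (degree X i) ^ 2 else 0) + (if adj X i k then 1 else 0)"
        using i k simpleD(4)[OF S, of i k] simpleD(3)[OF S, of i] by (auto simp: Q_entry power2_eq_square)
    qed
    also have "\<dots> = of_nat (degree X i) ^ 2 + of_nat (degree X i)"
      using i by (simp add: sum.distrib deg_sum[OF S])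
    finally show "(?Q * ?Q) $$ (i,i) = of_nat (degree X i) ^ 2 + of_nat (degree X i)" .
  qed
  finally show ?thesis .
qed

lemma c2_sym: "simple_graph X \<Longrightarrow> c2 X i j = c2 X j i"
  unfolding c2_def by (metis (no_types, lifting) simpleD(4))

lemma Q_reg_entry: "simple_graph X \<Longrightarrow> \<forall>i<nverts X. degree X i = r \<Longrightarrow> i < nverts X \<Longrightarrow> k < nverts X \<Longrightarrow>
   (signless_laplacian X - a \<cdot>\<^sub>m 1\<^sub>m (nverts X)) $$ (i,k) =
   (if adj X i k then 1 else 0) + (if i = k then of_nat r - a else 0)"
  by (simp add: msub_entry[OF Q_carrier] Q_entry)

lemma pf2_entry:
  assumes S: "simple_graph X" and R: "\<forall>i<nverts X. degree X i = r" and i: "i < nverts X" and j: "j < nverts X"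
  shows "pf (signless_laplacian X) (nverts X) [of_nat r + c, of_nat r - c] $$ (i,j) =
         of_nat (c2 X i j) - c^2 * (if i = j then 1 else 0)"
proof -
  let ?Q = "signless_laplacian X" and ?n = "nverts X"
  have C: "?Q \<in> carrier_mat ?n ?n" by (rule Q_carrier)
  let ?e = "\<lambda>i k. if adj X i k then (1::complex) else 0"
  have "pf ?Q ?n [of_nat r + c, of_nat r - c] = (?Q - (of_nat r + c) \<cdot>\<^sub>m 1\<^sub>m ?n) * (?Q - (of_nat r - c) \<cdot>\<^sub>m 1\<^sub>m ?n)"
    using C by (simp add: pf_two)
  then have "pf ?Q ?n [of_nat r + c, of_nat r - c] $$ (i,j) =
     (\<Sum>k<?n. (?Q - (of_nat r + c) \<cdot>\<^sub>m 1\<^sub>m ?n) $$ (i,k) * (?Q - (of_nat r - c) \<cdot>\<^sub>m 1\<^sub>m ?n) $$ (k,j))"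
    using C i j by (simp add: mult_entry[OF msub_carrier[OF C] msub_carrier[OF C] i j])
  also have "\<dots> = (\<Sum>k<?n. ?e i k * ?e k j + ?e i k * (if k = j then c else 0)
        - ((if i = k then c else 0) * ?e k j + (if i = k then c else 0) * (if k = j then c else 0)))"
  proof (intro sum.cong refl)
    fix k assume k: "k \<in> {..<?n}"
    then have k': "k < ?n" by simp
    show "(?Q - (of_nat r + c) \<cdot>\<^sub>m 1\<^sub>m ?n) $$ (i,k) * (?Q - (of_nat r - c) \<cdot>\<^sub>m 1\<^sub>m ?n) $$ (k,j) =
       ?e i k * ?e k j + ?e i k * (if k = j then c else 0)
        - ((if i = k then c else 0) * ?e k j + (if i = k then c else 0) * (if k = j then c else 0))"
      by (simp only: Q_reg_entry[OF S R i k'] Q_reg_entry[OF S R k' j]) (simp add: algebra_simps)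
  qed
  also have "\<dots> = (\<Sum>k<?n. ?e i k * ?e k j) + ?e i j * c - (c * ?e i j + c * (if i = j then c else 0))"
    using i j by (simp add: sum.distrib sum_subtractf sum_delta_r sum_delta_l)
  also have "(\<Sum>k<?n. ?e i k * ?e k j) = of_nat (c2 X i j)"
  proof -
    have "(\<Sum>k<?n. ?e i k * ?e k j) = (\<Sum>k<?n. if adj X i k \<and> adj X k j then 1 else 0)"
      by (intro sum.cong) auto
    also have "\<dots> = of_nat (card {k\<in>{..<?n}. adj X i k \<and> adj X k j})" by (rule sum_ind) simp
    also have "{k\<in>{..<?n}. adj X i k \<and> adj X k j} = {k. k < ?n \<and> adj X i k \<and> adj X k j}" by auto
    finally show ?thesis unfolding c2_def .
  qed
  finally show ?thesis by (simp add: power2_eq_square)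
qed

definition Nint :: "graph \<Rightarrow> nat \<Rightarrow> nat \<Rightarrow> nat \<Rightarrow> int" where
  "Nint X r i j = (\<Sum>k<nverts X. (int (c2 X i k) - (if i = k then 1 else 0)) *
                                 (int (c2 X k j) - (if k = j then int r ^ 2 else 0)))"

definition Nl :: "nat \<Rightarrow> complex list" where
  "Nl r = [of_nat r + 1, of_nat r - 1, of_nat r + of_nat r, of_nat r - of_nat r]"

lemma pfN_entry:
  assumes S: "simple_graph X" and R: "\<forall>i<nverts X. degree X i = r" and i: "i < nverts X" and j: "j < nverts X"
  shows "pf (signless_laplacian X) (nverts X) (Nl r) $$ (i,j) = of_int (Nint X r i j)"
proof -
  let ?Q = "signless_laplacian X" and ?n = "nverts X"
  have C: "?Q \<in> carrier_mat ?n ?n" by (rule Q_carrier)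
  have "pf ?Q ?n (Nl r) = pf ?Q ?n [of_nat r + 1, of_nat r - 1] * pf ?Q ?n [of_nat r + of_nat r, of_nat r - of_nat r]"
    unfolding Nl_def pf_append[OF C, symmetric] by simp
  then have "pf ?Q ?n (Nl r) $$ (i,j) = (\<Sum>k<?n. pf ?Q ?n [of_nat r + 1, of_nat r - 1] $$ (i,k) *
         pf ?Q ?n [of_nat r + of_nat r, of_nat r - of_nat r] $$ (k,j))"
    using mult_entry[OF pf_carrier[OF C] pf_carrier[OF C] i j] by simp
  also have "\<dots> = (\<Sum>k<?n. (of_nat (c2 X i k) - (if i = k then 1 else 0)) *
         (of_nat (c2 X k j) - (of_nat r)^2 * (if k = j then 1 else 0)))"
  proof (intro sum.cong refl)
    fix k assume "k \<in> {..<?n}"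
    then have k': "k < ?n" by simp
    show "pf ?Q ?n [of_nat r + 1, of_nat r - 1] $$ (i,k) * pf ?Q ?n [of_nat r + of_nat r, of_nat r - of_nat r] $$ (k,j) =
       (of_nat (c2 X i k) - (if i = k then 1 else 0)) * (of_nat (c2 X k j) - (of_nat r)^2 * (if k = j then 1 else 0))"
      unfolding pf2_entry[OF S R i k', of 1] pf2_entry[OF S R k' j, of "of_nat r"] by simp
  qed
  also have "\<dots> = of_int (Nint X r i j)"
    unfolding Nint_def of_int_sum by (intro sum.cong refl) auto
  finally show ?thesis .
qed

lemma tr_pfNN:
  assumes S: "simple_graph X" and R: "\<forall>i<nverts X. degree X i = r"
  shows "tr (pf (signless_laplacian X) (nverts X) (Nl r @ Nl r)) =
        of_int (\<Sum>i<nverts X. \<Sum>k<nverts X. Nint X r i k * Nint X r k i)"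
proof -
  let ?Q = "signless_laplacian X" and ?n = "nverts X"
  have C: "?Q \<in> carrier_mat ?n ?n" by (rule Q_carrier)
  have "tr (pf ?Q ?n (Nl r @ Nl r)) = (\<Sum>i<?n. (pf ?Q ?n (Nl r) * pf ?Q ?n (Nl r)) $$ (i,i))"
    unfolding tr_def pf_append[OF C] using pf_carrier[OF C, of "Nl r"] by simp
  also have "\<dots> = (\<Sum>i<?n. \<Sum>k<?n. of_int (Nint X r i k * Nint X r k i))"
    by (intro sum.cong refl) (simp add: mult_entry[OF pf_carrier[OF C] pf_carrier[OF C]] pfN_entry[OF S R])
  finally show ?thesis by simp
qed

lemma tr_pf3:
  assumes S: "simple_graph X" and R: "\<forall>i<nverts X. degree X i = r"
  shows "tr (pf (signless_laplacian X) (nverts X) [of_nat r, of_nat r, of_nat r]) =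
        of_nat (\<Sum>i<nverts X. \<Sum>k<nverts X. if adj X i k then c2 X k i else 0)"
proof -
  let ?Q = "signless_laplacian X" and ?n = "nverts X"
  have C: "?Q \<in> carrier_mat ?n ?n" by (rule Q_carrier)
  have e: "pf ?Q ?n [of_nat r, of_nat r, of_nat r] = pf ?Q ?n [of_nat r] * pf ?Q ?n [of_nat r + 0, of_nat r - 0]"
    unfolding pf_append[OF C, symmetric] by simp
  have "tr (pf ?Q ?n [of_nat r, of_nat r, of_nat r]) = (\<Sum>i<?n. (pf ?Q ?n [of_nat r] * pf ?Q ?n [of_nat r + 0, of_nat r - 0]) $$ (i,i))"
    unfolding tr_def e using pf_carrier[OF C, of "[of_nat r]"] by simp
  also have "\<dots> = (\<Sum>i<?n. \<Sum>k<?n. of_nat (if adj X i k then c2 X k i else 0))"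
  proof (intro sum.cong refl)
    fix i assume i: "i \<in> {..<?n}"
    then have i': "i < ?n" by simp
    have "(pf ?Q ?n [of_nat r] * pf ?Q ?n [of_nat r + 0, of_nat r - 0]) $$ (i,i) =
       (\<Sum>k<?n. pf ?Q ?n [of_nat r] $$ (i,k) * pf ?Q ?n [of_nat r + 0, of_nat r - 0] $$ (k,i))"
      by (rule mult_entry[OF pf_carrier[OF C] pf_carrier[OF C] i' i'])
    also have "\<dots> = (\<Sum>k<?n. of_nat (if adj X i k then c2 X k i else 0))"
    proof (intro sum.cong refl)
      fix k assume "k \<in> {..<?n}"
      then have k': "k < ?n" by simp
      show "pf ?Q ?n [of_nat r] $$ (i,k) * pf ?Q ?n [of_nat r + 0, of_nat r - 0] $$ (k,i) = of_nat (if adj X i k then c2 X k i else 0)"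
        unfolding pf2_entry[OF S R k' i', of 0] pf_single[OF C] Q_reg_entry[OF S R i' k'] by simp
    qed
    finally show "(pf ?Q ?n [of_nat r] * pf ?Q ?n [of_nat r + 0, of_nat r - 0]) $$ (i,i) = (\<Sum>k<?n. of_nat (if adj X i k then c2 X k i else 0))" .
  qed
  finally show ?thesis by simp
qed


lemma spec_tr:
  assumes "spec_Q H = spec_Q G"
  shows "nverts H = nverts G"
    "tr (pf (signless_laplacian H) (nverts H) as) = tr (pf (signless_laplacian G) (nverts G) as)"
proof -
  have e: "\<And>X as. tr (pf (signless_laplacian X) (nverts X) as) = (\<Sum>x\<in>#spec_Q X. \<Prod>a\<leftarrow>as. x - a)"
    unfolding spec_Q_def by (rule tr_pf_spec[OF Q_carrier])
  show "tr (pf (signless_laplacian H) (nverts H) as) = tr (pf (signless_laplacian G) (nverts G) as)"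
    unfolding e assms ..
  have "\<And>X. tr (pf (signless_laplacian X) (nverts X) []) = of_nat (nverts X)"
    by (simp add: pf_Nil tr_def)
  then have "(of_nat (nverts H) :: complex) = of_nat (nverts G)"
    using e[of H "[]"] e[of G "[]"] assms by simp
  then show "nverts H = nverts G" by simp
qed

lemma c2_diag: assumes S: "simple_graph X" shows "c2 X i i = degree X i"
proof -
  have "{k. k < nverts X \<and> adj X i k \<and> adj X k i} = {j. j < nverts X \<and> adj X i j}"
    using simpleD(4)[OF S] by auto
  then show ?thesis unfolding c2_def degree_def by simp
qed

lemma card_sum_nat: "card {k. k < (n::nat) \<and> P k} = (\<Sum>k<n. if P k then 1 else (0::nat))"
proof -
  have "{k\<in>{..<n}. P k} = {k. k < n \<and> P k}" by auto
  then show ?thesis using sum_ind[where 'a=nat, of "{..<n}" P] by simp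
qed

lemma c2_rowsum:
  assumes S: "simple_graph X" and R: "\<forall>i<nverts X. degree X i = r" and i: "i < nverts X"
  shows "(\<Sum>k<nverts X. c2 X i k) = r * r"
proof -
  let ?n = "nverts X"
  have "(\<Sum>k<?n. c2 X i k) = (\<Sum>k<?n. \<Sum>l<?n. if adj X i l \<and> adj X l k then 1 else (0::nat))"
    unfolding c2_def card_sum_nat by simp
  also have "\<dots> = (\<Sum>l<?n. \<Sum>k<?n. if adj X i l \<and> adj X l k then 1 else (0::nat))"
    by (rule sum.swap)
  also have "\<dots> = (\<Sum>l<?n. if adj X i l then r else 0)"
  proof (intro sum.cong refl)
    fix l assume l: "l \<in> {..<?n}"
    show "(\<Sum>k<?n. if adj X i l \<and> adj X l k then 1 else (0::nat)) = (if adj X i l then r else 0)"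
      using R l card_sum_nat[of ?n "adj X l"] unfolding degree_def by auto
  qed
  also have "\<dots> = r * degree X i"
    using card_sum_nat[of ?n "adj X i"] unfolding degree_def by (simp add: sum_distrib_left if_distrib cong: if_cong)
  finally show ?thesis using R i by simp
qed

lemma regular_from_sums:
  fixes d :: "nat \<Rightarrow> nat"
  assumes s1: "(\<Sum>i<n. d i) = r * n" and s2: "(\<Sum>i<n. d i ^ 2 + d i) = (r^2 + r) * n"
  shows "\<forall>i<n. d i = r"
proof -
  have s1': "(\<Sum>i<n. int (d i)) = int r * int n"
  proof -
    have "int (\<Sum>i<n. d i) = int (r * n)" using s1 by simp
    then show ?thesis by simp
  qed
  have s2': "(\<Sum>i<n. int (d i) ^ 2) = int r ^ 2 * int n"
  proof -
    have "int (\<Sum>i<n. d i ^ 2 + d i) = int ((r^2 + r) * n)" using s2 by simp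
    then have "(\<Sum>i<n. int (d i) ^ 2 + int (d i)) = (int r ^ 2 + int r) * int n" by simp
    then show ?thesis using s1' by (simp add: sum.distrib algebra_simps)
  qed
  have "(\<Sum>i<n. (int (d i) - int r) ^ 2) = (\<Sum>i<n. int (d i) ^ 2 - 2 * int r * int (d i) + int r ^ 2)"
    by (intro sum.cong refl) (simp add: power2_diff)
  also have "\<dots> = (\<Sum>i<n. int (d i) ^ 2) - (\<Sum>i<n. 2 * int r * int (d i)) + (\<Sum>i<n. int r ^ 2)"
    by (simp only: sum.distrib sum_subtractf)
  also have "\<dots> = int r ^ 2 * int n - 2 * int r * (int r * int n) + int n * int r ^ 2"
    by (simp only: s2' s1' flip: sum_distrib_left) simp
  also have "\<dots> = 0" by (simp add: algebra_simps power2_eq_square)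
  finally have "(\<Sum>i<n. (int (d i) - int r) ^ 2) = 0" .
  then have "\<forall>i\<in>{..<n}. (int (d i) - int r) ^ 2 = 0"
    by (subst sum_nonneg_eq_0_iff[symmetric]) auto
  then show ?thesis by auto
qed

lemma sum_zero_nonneg:
  fixes f :: "nat \<Rightarrow> int"
  assumes "finite A" "\<And>x. x \<in> A \<Longrightarrow> f x \<ge> 0" "sum f A = 0" "x \<in> A"
  shows "f x = 0"
  using assms sum_nonneg_eq_0_iff by blast

lemma M_struct:
  fixes M :: "nat \<Rightarrow> nat \<Rightarrow> int" and n :: nat and q :: int
  assumes sym: "\<And>i j. i < n \<Longrightarrow> j < n \<Longrightarrow> M i j = M j i"
    and nonneg: "\<And>i j. i < n \<Longrightarrow> j < n \<Longrightarrow> M i j \<ge> 0"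
    and diag: "\<And>i. i < n \<Longrightarrow> M i i = q"
    and rows: "\<And>i. i < n \<Longrightarrow> (\<Sum>k<n. M i k) = q * (q + 2)"
    and sq: "\<And>i j. i < n \<Longrightarrow> j < n \<Longrightarrow> (\<Sum>k<n. M i k * M k j) = q * (q + 2) * M i j"
    and q: "q \<ge> 1"
  shows "\<And>i j. i < n \<Longrightarrow> j < n \<Longrightarrow> M i j = 0 \<or> M i j = q"
    and "\<And>i j k. i < n \<Longrightarrow> j < n \<Longrightarrow> k < n \<Longrightarrow> M i j > 0 \<Longrightarrow> M j k > 0 \<Longrightarrow> M i k > 0"
    and "\<And>i. i < n \<Longrightarrow> int (card {k. k < n \<and> M i k > 0}) = q + 2"
proof -
  have bound: "M i j \<le> q" if ij: "i < n" "j < n" for i j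
  proof -
    let ?S = "(\<lambda>(i,j). M i j) ` ({..<n} \<times> {..<n})"
    have fin: "finite ?S" by simp
    have ne: "?S \<noteq> {}" using ij by auto
    obtain a b where ab: "a < n" "b < n" "M a b = Max ?S"
      using Max_in[OF fin ne] by auto
    have le: "\<And>i j. i < n \<Longrightarrow> j < n \<Longrightarrow> M i j \<le> Max ?S"
      by (intro Max_ge[OF fin]) auto
    have "(\<Sum>k<n. M a k * (Max ?S - M k b)) = Max ?S * (\<Sum>k<n. M a k) - (\<Sum>k<n. M a k * M k b)"
      by (simp add: algebra_simps sum_subtractf sum_distrib_left sum_distrib_right)
    also have "\<dots> = 0" using rows[OF ab(1)] sq[OF ab(1,2)] ab(3) by simp
    finally have z: "(\<Sum>k<n. M a k * (Max ?S - M k b)) = 0" .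
    have "M a b * (Max ?S - M b b) = 0"
    proof (rule sum_zero_nonneg[OF _ _ z])
      fix k assume "k \<in> {..<n}"
      then have k: "k < n" by simp
      show "M a k * (Max ?S - M k b) \<ge> 0"
        using nonneg[OF ab(1) k] le[OF k ab(2)] by simp
    qed (use ab in auto)
    moreover have "M a b > 0" using ab le[OF ab(1) ab(1)] diag[OF ab(1)] q by auto
    ultimately have "Max ?S = M b b" by simp
    then have "Max ?S = q" using diag[OF ab(2)] by simp
    then show ?thesis using le[OF ij] by simp
  qed
  show zq: "M i j = 0 \<or> M i j = q" if ij: "i < n" "j < n" for i j
  proof -
    have "(\<Sum>k<n. M i k * (q - M i k)) = q * (\<Sum>k<n. M i k) - (\<Sum>k<n. M i k * M i k)"
      by (simp add: algebra_simps sum_subtractf sum_distrib_left)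
    also have "(\<Sum>k<n. M i k * M i k) = (\<Sum>k<n. M i k * M k i)"
      using sym ij by (intro sum.cong) auto
    also have "q * (\<Sum>k<n. M i k) - (\<Sum>k<n. M i k * M k i) = 0"
    proof -
      have r1: "(\<Sum>k<n. M i k) = q * (q + 2)" by (rule rows[OF ij(1)])
      have r2: "(\<Sum>k<n. M i k * M k i) = q * (q + 2) * q" using sq[OF ij(1) ij(1)] diag[OF ij(1)] by simp
      show ?thesis by (simp only: r1 r2) (simp add: algebra_simps)
    qed
    finally have z: "(\<Sum>k<n. M i k * (q - M i k)) = 0" .
    have "M i j * (q - M i j) = 0"
    proof (rule sum_zero_nonneg[OF _ _ z])
      fix k assume "k \<in> {..<n}"
      then have k: "k < n" by simp
      show "M i k * (q - M i k) \<ge> 0"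
        using nonneg[OF ij(1) k] bound[OF ij(1) k] by simp
    qed (use ij in auto)
    then show ?thesis by auto
  qed
  show "M i k > 0" if "i < n" "j < n" "k < n" "M i j > 0" "M j k > 0" for i j k
  proof -
    have "M i j * M j k \<le> (\<Sum>l<n. M i l * M l k)"
    proof (rule member_le_sum[of j "{..<n}" "\<lambda>l. M i l * M l k"])
      fix l assume "l \<in> {..<n} - {j}"
      then have l: "l < n" by simp
      show "M i l * M l k \<ge> 0" using nonneg[OF that(1) l] nonneg[OF l that(3)] by simp
    qed (use that in auto)
    moreover have "M i j * M j k > 0" using that by simp
    ultimately have "q * (q + 2) * M i k > 0" using sq[OF that(1) that(3)] by linarith
    moreover have "q * (q + 2) > 0" using q by simp
    ultimately show ?thesis by (rule zero_less_mult_pos)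
  qed
  show "int (card {k. k < n \<and> M i k > 0}) = q + 2" if i: "i < n" for i
  proof -
    have "(\<Sum>k<n. M i k) = (\<Sum>k<n. if M i k > 0 then q else 0)"
    proof (intro sum.cong refl)
      fix k assume "k \<in> {..<n}"
      then show "M i k = (if M i k > 0 then q else 0)" using zq[OF i, of k] q by auto
    qed
    also have "\<dots> = q * int (card {k. k < n \<and> M i k > 0})"
    proof -
      have "(\<Sum>k<n. if M i k > 0 then q else 0) = (\<Sum>k\<in>{k\<in>{..<n}. M i k > 0}. q)"
        by (rule sum.inter_filter[symmetric]) simp
      also have "{k\<in>{..<n}. M i k > 0} = {k. k < n \<and> M i k > 0}" by auto
      finally show ?thesis by simp
    qed
    finally have cnt: "(\<Sum>k<n. M i k) = q * int (card {k. k < n \<and> M i k > 0})" .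
    have "q * int (card {k. k < n \<and> M i k > 0}) = q * (q + 2)" using rows[OF i] unfolding cnt .
    moreover have "q \<noteq> 0" using q by simp
    ultimately show ?thesis using mult_left_cancel by blast
  qed
qed


type_synonym tv = "nat \<times> nat \<times> nat \<times> nat"

definition VT :: "nat \<Rightarrow> nat \<Rightarrow> nat \<Rightarrow> tv set" where
  "VT m a b = {(0,t,0,s) | t s. t < a \<and> s < m} \<union> {(1,t,c,s) | t c s. t < b \<and> c < 2 \<and> s < m}"

fun adjT :: "tv \<Rightarrow> tv \<Rightarrow> bool" where
  "adjT (k,t,c,s) (k',t',c',s') = (k = k' \<and> t = t' \<and> s \<noteq> s' \<and> (k = 0 \<or> c \<noteq> c'))"

fun clsT :: "tv \<Rightarrow> nat \<times> nat \<times> nat" where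
  "clsT (k,t,c,s) = (k,t,c)"

fun posT :: "tv \<Rightarrow> nat" where
  "posT (k,t,c,s) = s"

fun opp :: "nat \<times> nat \<times> nat \<Rightarrow> nat \<times> nat \<times> nat" where
  "opp (k,t,c) = (k,t, if k = 0 then c else 1 - c)"

lemma VT_mem: "(k,t,c,s) \<in> VT m a b \<longleftrightarrow> s < m \<and> ((k = 0 \<and> c = 0 \<and> t < a) \<or> (k = 1 \<and> c < 2 \<and> t < b))"
  unfolding VT_def by auto

lemma VT_cases: assumes "x \<in> VT m a b"
  obtains t s where "x = (0,t,0,s)" "t < a" "s < m" | t c s where "x = (1,t,c,s)" "t < b" "c < 2" "s < m"
  using assms unfolding VT_def by auto

lemma adjT_iff: assumes "x \<in> VT m a b" "y \<in> VT m a b"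
  shows "adjT x y \<longleftrightarrow> clsT y = opp (clsT x) \<and> posT x \<noteq> posT y"
  using assms by (auto elim!: VT_cases; arith)

lemma adjT_sym: "adjT x y = adjT y x"
  by (cases x, cases y) auto

lemma adjT_irrefl: "\<not> adjT x x"
  by (cases x) auto

lemma opp_opp: "x \<in> VT m a b \<Longrightarrow> opp (opp (clsT x)) = clsT x"
  by (auto elim!: VT_cases)

lemma opp_VT: "x \<in> VT m a b \<Longrightarrow> (fst (opp (clsT x)), fst (snd (opp (clsT x))), snd (snd (opp (clsT x))), s) \<in> VT m a b \<longleftrightarrow> s < m"
  by (auto elim!: VT_cases simp: VT_mem)

lemma cls_VT: "x \<in> VT m a b \<Longrightarrow> (fst (clsT x), fst (snd (clsT x)), snd (snd (clsT x)), s) \<in> VT m a b \<longleftrightarrow> s < m"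
  by (auto elim!: VT_cases simp: VT_mem)

lemma slice:
  assumes val: "\<And>s. (fst p, fst (snd p), snd (snd p), s) \<in> VT m a b \<longleftrightarrow> s < m"
  shows "card {y \<in> VT m a b. clsT y = p \<and> Q (posT y)} = card {s. s < m \<and> Q s}"
proof -
  obtain k t c where p: "p = (k,t,c)" by (cases p) auto
  have "{y \<in> VT m a b. clsT y = p \<and> Q (posT y)} = (\<lambda>s. (k,t,c,s)) ` {s. s < m \<and> Q s}"
  proof (rule Set.set_eqI)
    fix y :: tv
    obtain k' t' c' s' where y: "y = (k',t',c',s')" by (cases y) auto
    show "y \<in> {y \<in> VT m a b. clsT y = p \<and> Q (posT y)} \<longleftrightarrow> y \<in> (\<lambda>s. (k,t,c,s)) ` {s. s < m \<and> Q s}"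
      using val[of s'] p y by auto
  qed
  also have "card \<dots> = card {s. s < m \<and> Q s}" by (rule card_image) (auto simp: inj_on_def)
  finally show ?thesis .
qed

lemma card_two: assumes "u < (m::nat)" "w < m"
  shows "card {s. s < m \<and> s \<noteq> u \<and> s \<noteq> w} = (if u = w then m - 1 else m - 2)"
proof -
  have e: "{s. s < m \<and> s \<noteq> u \<and> s \<noteq> w} = {..<m} - {u, w}" by auto
  have "card ({..<m} - {u, w}) = card {..<m} - card {u, w}"
    by (rule card_Diff_subset) (use assms in auto)
  then show ?thesis unfolding e by (cases "u = w") auto
qed

lemma T1: assumes x: "x \<in> VT m a b" and z: "z \<in> VT m a b"
  shows "card {y \<in> VT m a b. adjT x y \<and> adjT y z} =
     (if x = z then m - 1 else if clsT x = clsT z then m - 2 else 0)"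
proof -
  have e: "{y \<in> VT m a b. adjT x y \<and> adjT y z} =
           {y \<in> VT m a b. clsT y = opp (clsT x) \<and> clsT z = opp (clsT y) \<and> posT x \<noteq> posT y \<and> posT y \<noteq> posT z}"
  proof (intro Collect_cong)
    fix y show "(y \<in> VT m a b \<and> adjT x y \<and> adjT y z) =
      (y \<in> VT m a b \<and> clsT y = opp (clsT x) \<and> clsT z = opp (clsT y) \<and> posT x \<noteq> posT y \<and> posT y \<noteq> posT z)"
      using adjT_iff[OF x, of y] adjT_iff[OF _ z, of y] by blast
  qed
  show ?thesis
  proof (cases "clsT x = clsT z")
    case True
    have e2: "{y \<in> VT m a b. adjT x y \<and> adjT y z} =
           {y \<in> VT m a b. clsT y = opp (clsT x) \<and> (posT y \<noteq> posT x \<and> posT y \<noteq> posT z)}"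
      unfolding e
    proof (intro Collect_cong)
      fix y
      have "clsT y = opp (clsT x) \<Longrightarrow> opp (clsT y) = clsT z" using True opp_opp[OF x] by simp
      then show "(y \<in> VT m a b \<and> clsT y = opp (clsT x) \<and> clsT z = opp (clsT y) \<and> posT x \<noteq> posT y \<and> posT y \<noteq> posT z) =
          (y \<in> VT m a b \<and> clsT y = opp (clsT x) \<and> (posT y \<noteq> posT x \<and> posT y \<noteq> posT z))" by auto
    qed
    have px: "posT x < m" "posT z < m" using x z by (auto elim!: VT_cases)
    have xz: "x = z \<longleftrightarrow> posT x = posT z"
    proof -
      obtain k t c s where "x = (k,t,c,s)" by (cases x) auto
      moreover obtain k' t' c' s' where "z = (k',t',c',s')" by (cases z) auto
      ultimately show ?thesis using True by simp
    qed
    have "card {y \<in> VT m a b. adjT x y \<and> adjT y z} = card {s. s < m \<and> (s \<noteq> posT x \<and> s \<noteq> posT z)}"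
      unfolding e2 by (rule slice[OF opp_VT[OF x], of "\<lambda>s. s \<noteq> posT x \<and> s \<noteq> posT z"])
    then show ?thesis using card_two[OF px] xz True by auto
  next
    case False
    have E: "{y \<in> VT m a b. adjT x y \<and> adjT y z} = {}"
    proof -
      have "\<And>y. clsT y = opp (clsT x) \<Longrightarrow> clsT z \<noteq> opp (clsT y)" using False opp_opp[OF x] by auto
      then show ?thesis unfolding e by blast
    qed
    moreover have "x \<noteq> z" using False by auto
    ultimately show ?thesis using False by (subst E) simp
  qed
qed

lemma T2: assumes x: "x \<in> VT m a b"
  shows "card {y \<in> VT m a b. clsT y = clsT x} = m"
  using slice[OF cls_VT[OF x], of "\<lambda>_. True"] by simp

lemma T3: assumes x: "x \<in> VT m a b"
  shows "card {y \<in> VT m a b. adjT x y \<and> clsT y = clsT x} = (if fst x = 0 then m - 1 else 0)"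
proof (cases "fst x = 0")
  case True
  then have "opp (clsT x) = clsT x" by (cases x) auto
  then have "{y \<in> VT m a b. adjT x y \<and> clsT y = clsT x} = {y \<in> VT m a b. clsT y = clsT x \<and> posT y \<noteq> posT x}"
    using adjT_iff[OF x] by auto
  moreover have "posT x < m" using x by (auto elim!: VT_cases)
  ultimately show ?thesis using True slice[OF cls_VT[OF x], of "\<lambda>s. s \<noteq> posT x"] card_two[of "posT x" m "posT x"] by simp
next
  case False
  then have "opp (clsT x) \<noteq> clsT x" using x False by (auto elim!: VT_cases; arith)
  then have "\<And>y. y \<in> VT m a b \<Longrightarrow> adjT x y \<Longrightarrow> clsT y \<noteq> clsT x"
    using adjT_iff[OF x] by auto
  then have E: "{y \<in> VT m a b. adjT x y \<and> clsT y = clsT x} = {}" by blast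
  show ?thesis using False by (subst E) simp
qed

lemma card_VT: "card (VT m a b) = a * m + b * (2 * m)"
proof -
  have e: "VT m a b = (\<lambda>(t,s). (0,t,0,s)) ` ({..<a} \<times> {..<m}) \<union> Pair (Suc 0) ` ({..<b} \<times> {..<2} \<times> {..<m})"
    unfolding VT_def by auto
  have c1: "card ((\<lambda>(t,s). (0::nat,t,0::nat,s)) ` ({..<a} \<times> {..<m})) = a * m"
    by (subst card_image) (auto simp: inj_on_def card_cartesian_product)
  have inj2: "inj_on (Pair (Suc 0)) ({..<b} \<times> {..<2::nat} \<times> {..<m})"
    by (auto simp: inj_on_def)
  have c2: "card (Pair (Suc 0) ` ({..<b} \<times> {..<2::nat} \<times> {..<m})) = b * (2 * m)"
    by (subst card_image[OF inj2]) (simp add: card_cartesian_product)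
  show ?thesis unfolding e by (subst card_Un_disjoint) (auto simp: c1 c2)
qed

lemma finite_VT: "finite (VT m a b)"
proof -
  have "VT m a b \<subseteq> {..<2} \<times> {..<a+b} \<times> {..<2} \<times> {..<m}" unfolding VT_def by auto
  then show ?thesis by (rule finite_subset) auto
qed

definition Lab :: "nat \<Rightarrow> graph \<Rightarrow> nat \<Rightarrow> nat \<Rightarrow> (nat \<Rightarrow> tv) \<Rightarrow> bool" where
  "Lab m X a b \<phi> \<longleftrightarrow> bij_betw \<phi> {..<nverts X} (VT m a b) \<and>
     (\<forall>v<nverts X. \<forall>w<nverts X. adj X v w = adjT (\<phi> v) (\<phi> w))"

definition P2 :: "graph \<Rightarrow> nat \<Rightarrow> (nat \<Rightarrow> 'c) \<Rightarrow> bool" where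
  "P2 X r cls \<longleftrightarrow> (\<forall>i<nverts X. \<forall>j<nverts X. c2 X i j = (if i = j then r else if cls i = cls j then r - 1 else 0)) \<and>
      (\<forall>i<nverts X. card {j. j < nverts X \<and> cls j = cls i} = r + 1)"

definition sc :: "graph \<Rightarrow> (nat \<Rightarrow> 'c) \<Rightarrow> nat \<Rightarrow> nat" where
  "sc X cls i = card {k. k < nverts X \<and> adj X i k \<and> cls k = cls i}"

lemma card_transfer: assumes "bij_betw \<phi> A B"
  shows "card {x \<in> A. Q (\<phi> x)} = card {y \<in> B. Q y}"
proof -
  have "\<phi> ` {x \<in> A. Q (\<phi> x)} = {y \<in> B. Q y}" using assms by (auto simp: bij_betw_def)
  moreover have "inj_on \<phi> {x \<in> A. Q (\<phi> x)}" using assms by (auto simp: bij_betw_def inj_on_def)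
  ultimately show ?thesis by (metis card_image)
qed

lemma Lab_P2:
  assumes L: "Lab (r + 1) X a b \<phi>" and r: "r \<ge> 2"
  shows "P2 X r (clsT \<circ> \<phi>)" "(\<Sum>i<nverts X. sc X (clsT \<circ> \<phi>) i) = r * (a * (r + 1))"
proof -
  let ?n = "nverts X" and ?m = "r + 1"
  have bij: "bij_betw \<phi> {..<?n} (VT ?m a b)" and ad: "\<And>v w. v < ?n \<Longrightarrow> w < ?n \<Longrightarrow> adj X v w = adjT (\<phi> v) (\<phi> w)"
    using L unfolding Lab_def by auto
  have inV: "\<And>i. i < ?n \<Longrightarrow> \<phi> i \<in> VT ?m a b" using bij by (auto simp: bij_betw_def)
  have inj: "\<And>i j. i < ?n \<Longrightarrow> j < ?n \<Longrightarrow> \<phi> i = \<phi> j \<longleftrightarrow> i = j" using bij by (auto simp: bij_betw_def inj_on_def)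
  have c2e: "c2 X i j = (if i = j then r else if (clsT \<circ> \<phi>) i = (clsT \<circ> \<phi>) j then r - 1 else 0)"
    if i: "i < ?n" and j: "j < ?n" for i j
  proof -
    have "c2 X i j = card {k \<in> {..<?n}. adjT (\<phi> i) (\<phi> k) \<and> adjT (\<phi> k) (\<phi> j)}"
      unfolding c2_def using ad i j by (intro arg_cong[where f=card]) auto
    also have "\<dots> = card {y \<in> VT ?m a b. adjT (\<phi> i) y \<and> adjT y (\<phi> j)}" by (rule card_transfer[OF bij])
    also have "\<dots> = (if \<phi> i = \<phi> j then ?m - 1 else if clsT (\<phi> i) = clsT (\<phi> j) then ?m - 2 else 0)"
      by (rule T1[OF inV[OF i] inV[OF j]])
    finally show ?thesis using inj[OF i j] by simp
  qed
  have cse: "card {j. j < ?n \<and> (clsT \<circ> \<phi>) j = (clsT \<circ> \<phi>) i} = r + 1" if i: "i < ?n" for i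
  proof -
    have "card {j. j < ?n \<and> (clsT \<circ> \<phi>) j = (clsT \<circ> \<phi>) i} = card {j \<in> {..<?n}. clsT (\<phi> j) = clsT (\<phi> i)}"
      by (intro arg_cong[where f=card]) auto
    also have "\<dots> = card {y \<in> VT ?m a b. clsT y = clsT (\<phi> i)}" by (rule card_transfer[OF bij])
    also have "\<dots> = ?m" by (rule T2[OF inV[OF i]])
    finally show ?thesis .
  qed
  show "P2 X r (clsT \<circ> \<phi>)" unfolding P2_def using c2e cse by blast
  have sce: "sc X (clsT \<circ> \<phi>) i = (if fst (\<phi> i) = 0 then r else 0)" if i: "i < ?n" for i
  proof -
    have "sc X (clsT \<circ> \<phi>) i = card {k \<in> {..<?n}. adjT (\<phi> i) (\<phi> k) \<and> clsT (\<phi> k) = clsT (\<phi> i)}"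
      unfolding sc_def using ad i by (intro arg_cong[where f=card]) auto
    also have "\<dots> = card {y \<in> VT ?m a b. adjT (\<phi> i) y \<and> clsT y = clsT (\<phi> i)}" by (rule card_transfer[OF bij])
    also have "\<dots> = (if fst (\<phi> i) = 0 then ?m - 1 else 0)" by (rule T3[OF inV[OF i]])
    finally show ?thesis by simp
  qed
  have "(\<Sum>i<?n. sc X (clsT \<circ> \<phi>) i) = (\<Sum>i<?n. (\<lambda>x. if fst x = 0 then r else 0) (\<phi> i))"
    using sce by simp
  also have "\<dots> = (\<Sum>x\<in>VT ?m a b. if fst x = 0 then r else 0)"
    by (rule sum.reindex_bij_betw[OF bij])
  also have "\<dots> = r * card {x \<in> VT ?m a b. fst x = 0}"
    using sum.inter_filter[of "VT ?m a b" "\<lambda>_. r" "\<lambda>x. fst x = 0"] finite_VT[of ?m a b] by (simp add: mult.commute)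
  also have "{x \<in> VT ?m a b. fst x = 0} = (\<lambda>(t,s). (0,t,0,s)) ` ({..<a} \<times> {..<?m})"
    unfolding VT_def by auto
  also have "card \<dots> = a * ?m"
    by (subst card_image) (auto simp: inj_on_def card_cartesian_product)
  finally show "(\<Sum>i<?n. sc X (clsT \<circ> \<phi>) i) = r * (a * (r + 1))" .
qed


lemma rk_lt: assumes "finite S" "(v::nat) \<in> S" shows "card {u \<in> S. u < v} < card S"
  by (rule psubset_card_mono) (use assms in auto)

lemma rk_inj: assumes "finite S" "(v::nat) \<in> S" "w \<in> S" "card {u \<in> S. u < v} = card {u \<in> S. u < w}"
  shows "v = w"
proof (rule ccontr)
  assume "v \<noteq> w"
  then consider "v < w" | "w < v" by linarith
  then show False
  proof cases
    case 1
    have "card {u \<in> S. u < v} < card {u \<in> S. u < w}"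
      by (rule psubset_card_mono) (use assms 1 in auto)
    then show False using assms by simp
  next
    case 2
    have "card {u \<in> S. u < w} < card {u \<in> S. u < v}"
      by (rule psubset_card_mono) (use assms 2 in auto)
    then show False using assms by simp
  qed
qed

lemma sum_if_const: "(\<Sum>k<(n::nat). if P k then c else 0) = (c::nat) * card {k. k < n \<and> P k}"
proof -
  have "(\<Sum>k<n. if P k then c else 0) = (\<Sum>k\<in>{k\<in>{..<n}. P k}. c)"
    by (rule sum.inter_filter[symmetric]) simp
  also have "{k\<in>{..<n}. P k} = {k. k < n \<and> P k}" by auto
  finally show ?thesis by simp
qed

locale p2g =
  fixes X :: graph and r :: nat and cls :: "nat \<Rightarrow> 'c"
  assumes simple: "simple_graph X" and r2: "r \<ge> 2" and P2: "P2 X r cls"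
begin

abbreviation n where "n \<equiv> nverts X"

definition K :: "nat \<Rightarrow> nat set" where "K v = {j. j < n \<and> cls j = cls v}"

lemma c2e: "i < n \<Longrightarrow> j < n \<Longrightarrow> c2 X i j = (if i = j then r else if cls i = cls j then r - 1 else 0)"
  using P2 unfolding P2_def by blast

lemma Kcard: "i < n \<Longrightarrow> card (K i) = r + 1"
  using P2 unfolding P2_def K_def by blast

lemma deg: "i < n \<Longrightarrow> degree X i = r"
  using c2e[of i i] c2_diag[OF simple] by simp

lemma adjD: "adj X v w \<Longrightarrow> v < n \<and> w < n \<and> v \<noteq> w"
  using simpleD(1)[OF simple, of v w] simpleD(2)[OF simple, of v w] simpleD(3)[OF simple, of v] by blast

lemma adj_sym: "adj X v w = adj X w v"
  using simpleD(4)[OF simple] .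

lemma K_self: "v < n \<Longrightarrow> v \<in> K v" by (simp add: K_def)
lemma K_mem: "w \<in> K v \<Longrightarrow> K w = K v" by (auto simp: K_def)
lemma K_sub: "K v \<subseteq> {..<n}" by (auto simp: K_def)
lemma K_fin: "finite (K v)" using K_sub finite_subset by blast
lemma K_eq: "v < n \<Longrightarrow> w < n \<Longrightarrow> K v = K w \<longleftrightarrow> cls v = cls w"
  unfolding K_def by auto
lemma K_disj: "x \<in> K v \<Longrightarrow> x \<in> K w \<Longrightarrow> K v = K w"
  using K_mem[of x v] K_mem[of x w] by simp

lemma nb_same: assumes "adj X v x" "adj X v y" shows "cls x = cls y"
proof (cases "x = y")
  case False
  have xy: "x < n" "y < n" using adjD assms by auto
  have "v \<in> {k. k < n \<and> adj X x k \<and> adj X k y}" using assms adjD adj_sym by auto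
  moreover have "finite {k. k < n \<and> adj X x k \<and> adj X k y}" by simp
  ultimately have "card {k. k < n \<and> adj X x k \<and> adj X k y} > 0" using card_gt_0_iff by blast
  then have "c2 X x y \<noteq> 0" unfolding c2_def using gr_implies_not0 by blast
  then show ?thesis using c2e[OF xy] False by (auto split: if_splits)
qed simp

lemma ex_nb: assumes "v < n" shows "\<exists>x. adj X v x"
proof -
  have "card {j. j < n \<and> adj X v j} = r" using deg[OF assms] by (simp add: degree_def)
  then have "{j. j < n \<and> adj X v j} \<noteq> {}"
  proof (intro notI)
    assume "{j. j < n \<and> adj X v j} = {}"
    then have "card {j. j < n \<and> adj X v j} = 0" by (simp only: card.empty)
    then show False using \<open>card {j. j < n \<and> adj X v j} = r\<close> r2 by simp
  qed
  then show ?thesis by blast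
qed

definition nb :: "nat \<Rightarrow> nat" where "nb v = (SOME x. adj X v x)"
definition P :: "nat \<Rightarrow> nat set" where "P v = K (nb v)"

lemma nb_adj: "v < n \<Longrightarrow> adj X v (nb v)"
  unfolding nb_def using ex_nb by (rule someI_ex)

lemma adj_P: assumes "adj X v w" shows "w \<in> P v"
proof -
  have v: "v < n" using adjD assms by auto
  have "cls w = cls (nb v)" using nb_same[OF assms nb_adj[OF v]] .
  then show ?thesis unfolding P_def K_def using adjD assms by auto
qed

definition N :: "nat \<Rightarrow> nat set" where "N v = {w. w < n \<and> adj X v w}"

lemma N_card: "v < n \<Longrightarrow> card (N v) = r"
  using deg unfolding degree_def N_def by simp

lemma N_sub: "N v \<subseteq> P v" using adj_P unfolding N_def by auto

lemma P_card: "v < n \<Longrightarrow> card (P v) = r + 1"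
  unfolding P_def using Kcard adjD nb_adj by blast

lemma P_fin: "finite (P v)" unfolding P_def by (rule K_fin)
lemma P_sub: "P v \<subseteq> {..<n}" unfolding P_def by (rule K_sub)

lemma PN_single: assumes v: "v < n" shows "\<exists>u. P v - N v = {u}"
proof -
  have "card (P v - N v) = card (P v) - card (N v)"
    by (rule card_Diff_subset[OF finite_subset[OF N_sub P_fin] N_sub])
  then have "card (P v - N v) = 1" using P_card[OF v] N_card[OF v] by simp
  then show ?thesis by (rule card_1_singletonE) auto
qed

definition mu :: "nat \<Rightarrow> nat" where "mu v = (THE u. u \<in> P v \<and> \<not> adj X v u)"

lemma mu_char: assumes v: "v < n" shows "u \<in> P v \<and> \<not> adj X v u \<longleftrightarrow> u = mu v"
proof -
  obtain u0 where u0: "P v - N v = {u0}" using PN_single[OF v] by auto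
  have ch: "u \<in> P v \<and> \<not> adj X v u \<longleftrightarrow> u = u0" for u
  proof -
    have "u \<in> P v \<and> \<not> adj X v u \<longleftrightarrow> u \<in> P v - N v" using P_sub unfolding N_def by auto
    then show ?thesis using u0 by auto
  qed
  have "mu v = u0" unfolding mu_def using ch by (intro the_equality) auto
  then show ?thesis using ch by simp
qed

lemma mu_P: "v < n \<Longrightarrow> mu v \<in> P v" using mu_char by blast
lemma mu_nadj: "v < n \<Longrightarrow> \<not> adj X v (mu v)" using mu_char by blast
lemma mu_lt: "v < n \<Longrightarrow> mu v < n" using mu_P P_sub by blast

lemma key: assumes v: "v < n" and w: "w < n" shows "adj X v w \<longleftrightarrow> w \<in> P v \<and> w \<noteq> mu v"
  using mu_char[OF v, of w] adj_P mu_nadj[OF v] by blast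

lemma P_nb: assumes "adj X v x" shows "P v = K x"
proof -
  have v: "v < n" using adjD assms by auto
  have "x \<in> P v" by (rule adj_P[OF assms])
  then have "K x = K (nb v)" unfolding P_def by (rule K_mem)
  then show ?thesis unfolding P_def by simp
qed

lemma P_of_nb: assumes "adj X v x" shows "P x = K v"
proof -
  have "v \<in> P x" using adj_P assms adj_sym by blast
  then have "K v = K (nb x)" unfolding P_def by (rule K_mem)
  then show ?thesis unfolding P_def by simp
qed

lemma P_cls: assumes v: "v < n" and w: "w < n" and c: "cls v = cls w" shows "P v = P w"
proof (cases "v = w")
  case False
  then have "c2 X v w = r - 1" using c2e[OF v w] c by simp
  then have "c2 X v w \<noteq> 0" using r2 by simp
  then have "{k. k < n \<and> adj X v k \<and> adj X k w} \<noteq> {}" unfolding c2_def by (intro notI) simp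
  then obtain x where x: "adj X v x" "adj X x w" by auto
  have "P v = K x" by (rule P_nb[OF x(1)])
  moreover have "P w = K x" using P_nb[of w x] adj_sym[of x w] x(2) by simp
  ultimately show ?thesis by simp
qed simp

lemma P_K: assumes "v \<in> K w" "w < n" shows "P v = P w"
proof -
  have "v < n" "cls v = cls w" using assms(1) unfolding K_def by auto
  then show ?thesis using P_cls assms(2) by blast
qed

lemma P_is_K: "x \<in> P v \<Longrightarrow> K x = P v"
  unfolding P_def by (rule K_mem)

definition ct :: "nat \<Rightarrow> bool" where "ct v \<longleftrightarrow> v \<in> P v"

lemma ct_PK: "v < n \<Longrightarrow> ct v \<longleftrightarrow> P v = K v"
  unfolding ct_def using P_is_K[of v v] K_self[of v] by auto

lemma ct_mu: assumes v: "v < n" and c: "ct v" shows "mu v = v"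
proof -
  have "v \<in> P v \<and> \<not> adj X v v" using c simpleD(3)[OF simple, of v] unfolding ct_def by simp
  then have "v = mu v" using mu_char[OF v, of v] by blast
  then show ?thesis by simp
qed

lemma ct_adj: assumes v: "v < n" and w: "w < n" and c: "ct v"
  shows "adj X v w \<longleftrightarrow> cls w = cls v \<and> w \<noteq> v"
  using key[OF v w] ct_mu[OF v c] ct_PK[OF v] c w unfolding K_def by auto

lemma ncr_disj: assumes v: "v < n" and c: "\<not> ct v" shows "K v \<inter> P v = {}"
proof (rule ccontr)
  assume "K v \<inter> P v \<noteq> {}"
  then obtain x where x: "x \<in> K v" "x \<in> P v" by auto
  have "K x = K v" using K_mem[OF x(1)] .
  moreover have "K x = P v" using P_is_K[OF x(2)] .
  ultimately have "P v = K v" by simp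
  then show False using c ct_PK[OF v] by simp
qed

lemma ct_cls: assumes v: "v < n" and w: "w < n" and c: "cls v = cls w" shows "ct v \<longleftrightarrow> ct w"
  using ct_PK[OF v] ct_PK[OF w] P_cls[OF v w c] K_eq[OF v w] c by simp

lemma ct_K: assumes "w \<in> K v" "v < n" shows "ct w \<longleftrightarrow> ct v"
proof -
  have "w < n" "cls w = cls v" using assms(1) unfolding K_def by auto
  then show ?thesis using ct_cls assms(2) by blast
qed

lemma cr_P: assumes v: "v < n" and c: "\<not> ct v" and x: "x \<in> P v" shows "P x = K v"
proof -
  have a: "adj X v (nb v)" by (rule nb_adj[OF v])
  have "P (nb v) = K v" by (rule P_of_nb[OF a])
  moreover have "x \<in> K (nb v)" using x unfolding P_def .
  moreover have "nb v < n" using adjD a by auto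
  ultimately show ?thesis using P_K[of x "nb v"] by simp
qed

lemma cr_mumu: assumes v: "v < n" and c: "\<not> ct v" shows "mu (mu v) = v"
proof -
  let ?u = "mu v"
  have u: "?u < n" "?u \<in> P v" using mu_lt[OF v] mu_P[OF v] by auto
  have "P ?u = K v" by (rule cr_P[OF v c u(2)])
  then have "v \<in> P ?u" using K_self[OF v] by simp
  moreover have "\<not> adj X ?u v" using mu_nadj[OF v] adj_sym[of "mu v" v] by simp
  ultimately show ?thesis using mu_char[OF u(1), of v] by simp
qed

lemma cr_P_nct: assumes v: "v < n" and c: "\<not> ct v" and x: "x \<in> P v" shows "\<not> ct x"
proof -
  have "P x = K v" by (rule cr_P[OF v c x])
  moreover have "x \<notin> K v" using ncr_disj[OF v c] x by auto
  ultimately show ?thesis unfolding ct_def by simp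
qed

lemma sc_val: assumes i: "i < n" shows "sc X cls i = (if ct i then r else 0)"
proof (cases "ct i")
  case True
  have "{k. k < n \<and> adj X i k \<and> cls k = cls i} = K i - {i}"
    using ct_adj[OF i _ True] unfolding K_def by auto
  then have "sc X cls i = card (K i) - 1" unfolding sc_def using K_self[OF i] K_fin by simp
  then show ?thesis using Kcard[OF i] True by simp
next
  case False
  have "{k. k < n \<and> adj X i k \<and> cls k = cls i} = {}"
  proof -
    have "\<And>k. adj X i k \<Longrightarrow> cls k \<noteq> cls i"
    proof -
      fix k assume a: "adj X i k"
      have "k \<in> P i" by (rule adj_P[OF a])
      then have "k \<notin> K i" using ncr_disj[OF i False] by auto
      then show "cls k \<noteq> cls i" using adjD[OF a] unfolding K_def by auto
    qed
    then show ?thesis by auto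
  qed
  then show ?thesis unfolding sc_def using False by simp
qed

lemma tri_sum: "(\<Sum>i<n. \<Sum>k<n. if adj X i k then c2 X k i else 0) = (r - 1) * (\<Sum>i<n. sc X cls i)"
proof -
  have "(\<Sum>k<n. if adj X i k then c2 X k i else 0) = (r - 1) * sc X cls i" if i: "i < n" for i
  proof -
    have "(\<Sum>k<n. if adj X i k then c2 X k i else 0) = (\<Sum>k<n. if adj X i k \<and> cls k = cls i then r - 1 else 0)"
    proof (intro sum.cong refl)
      fix k assume "k \<in> {..<n}"
      then have k: "k < n" by simp
      show "(if adj X i k then c2 X k i else 0) = (if adj X i k \<and> cls k = cls i then r - 1 else 0)"
        using c2e[OF k i] adjD[of i k] by auto
    qed
    also have "\<dots> = (r - 1) * card {k. k < n \<and> adj X i k \<and> cls k = cls i}"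
      by (rule sum_if_const)
    finally show ?thesis unfolding sc_def .
  qed
  then show ?thesis by (simp add: sum_distrib_left)
qed

end


lemma nverts_du[simp]: "nverts (disjoint_union X Y) = nverts X + nverts Y"
  by (simp add: disjoint_union_def nverts_def)

lemma adj_du: "adj (disjoint_union X Y) i j =
   ((i < nverts X \<and> j < nverts X \<and> adj X i j) \<or>
    (nverts X \<le> i \<and> nverts X \<le> j \<and> adj Y (i - nverts X) (j - nverts X)))"
  by (simp add: disjoint_union_def adj_def nverts_def)

lemma simple_du: assumes "simple_graph X" "simple_graph Y" shows "simple_graph (disjoint_union X Y)"
  using assms unfolding simple_graph_def adj_du nverts_du by fastforce

lemma simple_empty: "simple_graph empty_graph"
  by (simp add: simple_graph_def empty_graph_def adj_def nverts_def)

lemma simple_copies: "simple_graph X \<Longrightarrow> simple_graph (copies k X)"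
  by (induction k) (auto simp: simple_empty simple_du)

lemma nverts_complete[simp]: "nverts (complete_graph m) = m" by (simp add: complete_graph_def nverts_def)
lemma adj_complete: "adj (complete_graph m) i j = (i < m \<and> j < m \<and> i \<noteq> j)" by (simp add: complete_graph_def adj_def)
lemma nverts_crown[simp]: "nverts (crown_graph m) = 2 * m" by (simp add: crown_graph_def nverts_def)
lemma adj_crown: "adj (crown_graph m) i j = (i < 2 * m \<and> j < 2 * m \<and>
      ((i < m \<and> m \<le> j \<and> j - m \<noteq> i) \<or> (j < m \<and> m \<le> i \<and> i - m \<noteq> j)))"
  by (simp add: crown_graph_def adj_def)

lemma simple_complete: "simple_graph (complete_graph m)"
  unfolding simple_graph_def adj_complete by auto
lemma simple_crown: "simple_graph (crown_graph m)"
  unfolding simple_graph_def adj_crown by auto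

lemma Lab_complete: "Lab m (complete_graph m) 1 0 (\<lambda>v. (0,0,0,v))"
proof -
  have "VT m 1 0 = (\<lambda>v. (0,0,0,v)) ` {..<m}" unfolding VT_def by auto
  then have "bij_betw (\<lambda>v. (0::nat,0::nat,0::nat,v)) {..<m} (VT m 1 0)"
    by (simp add: bij_betw_def inj_on_def)
  then show ?thesis unfolding Lab_def adj_complete by auto
qed

lemma Lab_crown: "Lab m (crown_graph m) 0 1 (\<lambda>v. if v < m then (1,0,0,v) else (1,0,1,v-m))"
proof -
  let ?f = "\<lambda>v. if v < m then (1::nat,0::nat,0::nat,v) else (1,0,1,v-m)"
  have "VT m 0 1 = ?f ` {..<2*m}"
  proof (rule Set.set_eqI)
    fix x :: tv
    obtain k t c s where x: "x = (k,t,c,s)" by (cases x) auto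
    show "x \<in> VT m 0 1 \<longleftrightarrow> x \<in> ?f ` {..<2*m}"
    proof
      assume "x \<in> VT m 0 1"
      then have "k = 1" "t = 0" "c < 2" "s < m" using x by (auto simp: VT_mem)
      then show "x \<in> ?f ` {..<2*m}"
      proof (cases "c = 0")
        case True then show ?thesis using x \<open>k = 1\<close> \<open>t = 0\<close> \<open>s < m\<close> by (auto simp: image_iff intro!: bexI[of _ s])
      next
        case False then have "c = 1" using \<open>c < 2\<close> by simp
        then show ?thesis using x \<open>k = 1\<close> \<open>t = 0\<close> \<open>s < m\<close> by (auto simp: image_iff intro!: bexI[of _ "s + m"])
      qed
    next
      assume "x \<in> ?f ` {..<2*m}"
      then show "x \<in> VT m 0 1" by (auto simp: VT_mem split: if_splits)
    qed
  qed
  moreover have "inj_on ?f {..<2*m}" by (auto simp: inj_on_def split: if_splits)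
  ultimately have "bij_betw ?f {..<2*m} (VT m 0 1)" by (simp add: bij_betw_def)
  moreover have "\<forall>v<2*m. \<forall>w<2*m. adj (crown_graph m) v w = adjT (?f v) (?f w)"
    unfolding adj_crown by auto
  ultimately show ?thesis unfolding Lab_def by simp
qed

lemma Lab_empty: "Lab m empty_graph 0 0 f"
  unfolding Lab_def by (simp add: empty_graph_def nverts_def VT_def bij_betw_def)

fun shift :: "nat \<Rightarrow> nat \<Rightarrow> tv \<Rightarrow> tv" where
  "shift a b (k,t,c,s) = (k, t + (if k = 0 then a else b), c, s)"

lemma adjT_shift: "adjT (shift a b x) (shift a b y) = adjT x y"
  by (cases x, cases y) auto

lemma adjT_shift_mix: assumes "x \<in> VT m a b" shows "\<not> adjT x (shift a b y)" "\<not> adjT (shift a b y) x"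
  using assms by (cases y; auto simp: VT_mem elim!: VT_cases)+

lemma VT_union: "VT m (a + a') (b + b') = VT m a b \<union> shift a b ` VT m a' b'"
proof (rule Set.set_eqI)
  fix x :: tv
  obtain k t c s where x: "x = (k,t,c,s)" by (cases x) auto
  show "x \<in> VT m (a + a') (b + b') \<longleftrightarrow> x \<in> VT m a b \<union> shift a b ` VT m a' b'"
  proof
    assume "x \<in> VT m (a + a') (b + b')"
    then have h: "s < m" "(k = 0 \<and> c = 0 \<and> t < a + a') \<or> (k = 1 \<and> c < 2 \<and> t < b + b')" using x by (auto simp: VT_mem)
    show "x \<in> VT m a b \<union> shift a b ` VT m a' b'"
    proof (cases "(k = 0 \<and> t < a) \<or> (k = 1 \<and> t < b)")
      case True then show ?thesis using h x by (auto simp: VT_mem)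
    next
      case False
      then have "x = shift a b (k, t - (if k = 0 then a else b), c, s)" using h x by auto
      moreover have "(k, t - (if k = 0 then a else b), c, s) \<in> VT m a' b'" using h False by (auto simp: VT_mem)
      ultimately show ?thesis by blast
    qed
  next
    assume "x \<in> VT m a b \<union> shift a b ` VT m a' b'"
    then show "x \<in> VT m (a + a') (b + b')" by (auto simp: VT_mem elim!: VT_cases)
  qed
qed

lemma VT_disj: "VT m a b \<inter> shift a b ` VT m a' b' = {}"
  by (auto simp: VT_mem elim!: VT_cases)

lemma inj_shift: "inj_on (shift a b) A"
proof (rule inj_onI)
  fix x y assume "shift a b x = shift a b y"
  then show "x = y" by (cases x, cases y) (auto split: if_splits)
qed

lemma Lab_union:
  assumes LX: "Lab m X a b \<phi>" and LY: "Lab m Y a' b' \<psi>"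
  shows "Lab m (disjoint_union X Y) (a + a') (b + b')
           (\<lambda>v. if v < nverts X then \<phi> v else shift a b (\<psi> (v - nverts X)))"
proof -
  let ?F = "\<lambda>v. if v < nverts X then \<phi> v else shift a b (\<psi> (v - nverts X))"
  let ?nX = "nverts X" and ?nY = "nverts Y"
  have bX: "bij_betw \<phi> {..<?nX} (VT m a b)" and aX: "\<And>v w. v < ?nX \<Longrightarrow> w < ?nX \<Longrightarrow> adj X v w = adjT (\<phi> v) (\<phi> w)"
    using LX unfolding Lab_def by auto
  have bY: "bij_betw \<psi> {..<?nY} (VT m a' b')" and aY: "\<And>v w. v < ?nY \<Longrightarrow> w < ?nY \<Longrightarrow> adj Y v w = adjT (\<psi> v) (\<psi> w)"
    using LY unfolding Lab_def by auto
  have b1: "bij_betw ?F {..<?nX} (VT m a b)"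
    using bX by (rule bij_betw_cong[THEN iffD1, rotated]) auto
  have s1: "bij_betw (\<lambda>v. v - ?nX) {?nX..<?nX + ?nY} {..<?nY}"
  proof -
    have "(\<lambda>v. v - ?nX) ` {?nX..<?nX + ?nY} = {..<?nY}"
    proof (rule Set.set_eqI)
      fix x show "x \<in> (\<lambda>v. v - ?nX) ` {?nX..<?nX + ?nY} \<longleftrightarrow> x \<in> {..<?nY}"
        by (auto simp: image_iff intro!: bexI[of _ "x + ?nX"])
    qed
    then show ?thesis by (auto simp: bij_betw_def inj_on_def)
  qed
  have s2: "bij_betw (shift a b) (VT m a' b') (shift a b ` VT m a' b')"
    by (simp add: bij_betw_def inj_shift)
  have b2': "bij_betw (shift a b \<circ> (\<psi> \<circ> (\<lambda>v. v - ?nX))) {?nX..<?nX + ?nY} (shift a b ` VT m a' b')"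
    by (rule bij_betw_trans[OF bij_betw_trans[OF s1 bY] s2])
  have b2: "bij_betw ?F {?nX..<?nX + ?nY} (shift a b ` VT m a' b')"
    using b2' by (rule bij_betw_cong[THEN iffD1, rotated]) auto
  have "bij_betw ?F ({..<?nX} \<union> {?nX..<?nX + ?nY}) (VT m a b \<union> shift a b ` VT m a' b')"
    by (rule bij_betw_combine[OF b1 b2 VT_disj])
  moreover have "{..<?nX} \<union> {?nX..<?nX + ?nY} = {..<?nX + ?nY}" by auto
  ultimately have bij: "bij_betw ?F {..<nverts (disjoint_union X Y)} (VT m (a + a') (b + b'))"
    by (simp add: VT_union)
  have inX: "\<And>v. v < ?nX \<Longrightarrow> \<phi> v \<in> VT m a b" using bX by (auto simp: bij_betw_def)
  have adj: "adj (disjoint_union X Y) v w = adjT (?F v) (?F w)"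
    if v: "v < ?nX + ?nY" and w: "w < ?nX + ?nY" for v w
  proof (cases "v < ?nX"; cases "w < ?nX")
    assume "v < ?nX" "w < ?nX" then show ?thesis using aX by (simp add: adj_du)
  next
    assume "v < ?nX" "\<not> w < ?nX" then show ?thesis using adjT_shift_mix(1)[OF inX] by (simp add: adj_du)
  next
    assume "\<not> v < ?nX" "w < ?nX" then show ?thesis using adjT_shift_mix(2)[OF inX] by (simp add: adj_du)
  next
    assume "\<not> v < ?nX" "\<not> w < ?nX" then show ?thesis using aY v w by (simp add: adj_du adjT_shift)
  qed
  show ?thesis unfolding Lab_def using bij adj by simp
qed

lemma Lab_copies: assumes "Lab m X a b \<phi>" shows "\<exists>\<psi>. Lab m (copies k X) (k * a) (k * b) \<psi>"
proof (induction k)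
  case 0 then show ?case using Lab_empty by auto
next
  case (Suc k)
  then obtain \<psi> where "Lab m (copies k X) (k * a) (k * b) \<psi>" by auto
  from Lab_union[OF this assms] show ?case by (auto simp: add.commute)
qed

lemma G_Lab: "\<exists>\<phi>. Lab (r + 1) (disjoint_union (copies g (complete_graph (r + 1))) (copies h (crown_graph (r + 1)))) g h \<phi>"
proof -
  obtain \<phi>1 where 1: "Lab (r + 1) (copies g (complete_graph (r + 1))) (g * 1) (g * 0) \<phi>1"
    using Lab_copies[OF Lab_complete] by blast
  obtain \<phi>2 where 2: "Lab (r + 1) (copies h (crown_graph (r + 1))) (h * 0) (h * 1) \<phi>2"
    using Lab_copies[OF Lab_crown] by blast
  show ?thesis using Lab_union[OF 1 2] by auto
qed

lemma G_simple: "simple_graph (disjoint_union (copies g (complete_graph m)) (copies h (crown_graph m)))"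
  by (intro simple_du simple_copies simple_complete simple_crown)


context p2g
begin

definition CT :: "nat set" where "CT = {v. v < n \<and> ct v}"
definition CR :: "nat set" where "CR = {v. v < n \<and> \<not> ct v}"
definition CC :: "nat set set" where "CC = K ` CT"
definition MC :: "nat set" where "MC = Min ` CC"
definition pr :: "nat \<Rightarrow> nat set" where "pr v = K v \<union> P v"
definition PP :: "nat set set" where "PP = pr ` CR"
definition MP :: "nat set" where "MP = Min ` PP"
definition L :: "nat \<Rightarrow> nat set" where "L v = K (Min (pr v))"

definition phi :: "nat \<Rightarrow> tv" where
  "phi v = (if ct v then (0, card {z \<in> MC. z < Min (K v)}, 0, card {u \<in> K v. u < v})
            else (1, card {z \<in> MP. z < Min (pr v)}, if v \<in> L v then 0 else 1,
                  if v \<in> L v then card {u \<in> L v. u < v} else card {u \<in> L v. u < mu v}))"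

lemma K_Min: "v < n \<Longrightarrow> Min (K v) \<in> K v"
  using K_self K_fin by (intro Min_in) auto

lemma pr_fin: "finite (pr v)" unfolding pr_def using K_fin P_fin by simp

lemma pr_Min: "v < n \<Longrightarrow> Min (pr v) \<in> pr v"
  using K_self pr_fin unfolding pr_def by (intro Min_in) auto

lemma pr_mem: assumes v: "v < n" and c: "\<not> ct v" and x: "x \<in> pr v"
  shows "x < n \<and> \<not> ct x \<and> pr x = pr v"
proof (cases "x \<in> K v")
  case True
  have "x < n" using True K_sub by auto
  moreover have "K x = K v" by (rule K_mem[OF True])
  moreover have "P x = P v" by (rule P_K[OF True v])
  moreover have "\<not> ct x" using ct_K[OF True v] c by simp
  ultimately show ?thesis unfolding pr_def by simp
next
  case False
  then have xP: "x \<in> P v" using x unfolding pr_def by simp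
  have "x < n" using xP P_sub by auto
  moreover have "K x = P v" by (rule P_is_K[OF xP])
  moreover have "P x = K v" by (rule cr_P[OF v c xP])
  moreover have "\<not> ct x" by (rule cr_P_nct[OF v c xP])
  ultimately show ?thesis unfolding pr_def by auto
qed

lemma L_cases: assumes v: "v < n" and c: "\<not> ct v"
  shows "(v \<in> L v \<and> L v = K v) \<or> (v \<notin> L v \<and> L v = P v)"
proof -
  have m: "Min (pr v) \<in> K v \<union> P v" using pr_Min[OF v] unfolding pr_def .
  have d: "v \<notin> P v" using c unfolding ct_def .
  show ?thesis
  proof (cases "Min (pr v) \<in> K v")
    case True
    then have "L v = K v" unfolding L_def by (rule K_mem)
    then show ?thesis using K_self[OF v] by simp
  next
    case False
    then have "Min (pr v) \<in> P v" using m by simp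
    then have "L v = P v" unfolding L_def by (rule P_is_K)
    then show ?thesis using d by simp
  qed
qed

lemma L_card: assumes v: "v < n" and c: "\<not> ct v" shows "card (L v) = r + 1"
  using L_cases[OF v c] Kcard[OF v] P_card[OF v] by auto

lemma L_fin: "finite (L v)" unfolding L_def by (rule K_fin)

lemma L_pr: assumes v: "v < n" and c: "\<not> ct v" and x: "x \<in> pr v" shows "L x = L v"
  using pr_mem[OF v c x] unfolding L_def by simp

lemma ct_phi0: "ct v \<Longrightarrow> fst (phi v) = 0" unfolding phi_def by simp
lemma cr_phi1: "\<not> ct v \<Longrightarrow> fst (phi v) = 1" unfolding phi_def by simp

lemma Min_inj_disj:
  fixes C :: "nat set set"
  assumes "\<And>c. c \<in> C \<Longrightarrow> finite c \<and> c \<noteq> {}"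
    and "\<And>c1 c2 x. c1 \<in> C \<Longrightarrow> c2 \<in> C \<Longrightarrow> x \<in> c1 \<Longrightarrow> x \<in> c2 \<Longrightarrow> c1 = c2"
  shows "inj_on Min C"
proof (rule inj_onI)
  fix c1 c2 assume c: "c1 \<in> C" "c2 \<in> C" "Min c1 = Min (c2 :: nat set)"
  have "Min c1 \<in> c1" using assms(1)[OF c(1)] by (intro Min_in) auto
  moreover have "Min c1 \<in> c2" using assms(1)[OF c(2)] c(3) by (simp add: Min_in)
  ultimately show "c1 = c2" using assms(2)[OF c(1) c(2)] by blast
qed

lemma CC_props: "finite CC" "\<And>c. c \<in> CC \<Longrightarrow> card c = r + 1 \<and> finite c \<and> c \<noteq> {}"
  "\<And>c1 c2 x. c1 \<in> CC \<Longrightarrow> c2 \<in> CC \<Longrightarrow> x \<in> c1 \<Longrightarrow> x \<in> c2 \<Longrightarrow> c1 = c2"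
  "\<Union> CC = CT"
proof -
  show "finite CC" unfolding CC_def CT_def by simp
  show "card c = r + 1 \<and> finite c \<and> c \<noteq> {}" if "c \<in> CC" for c
    using that Kcard K_fin K_self unfolding CC_def CT_def by auto
  show "c1 = c2" if "c1 \<in> CC" "c2 \<in> CC" "x \<in> c1" "x \<in> c2" for c1 c2 x
    using that K_disj unfolding CC_def by auto
  show "\<Union> CC = CT"
  proof (rule Set.set_eqI)
    fix x show "x \<in> \<Union> CC \<longleftrightarrow> x \<in> CT"
    proof
      assume "x \<in> \<Union> CC"
      then obtain v where v: "v \<in> CT" "x \<in> K v" unfolding CC_def by auto
      then show "x \<in> CT" using ct_K[OF v(2)] K_sub unfolding CT_def by auto
    next
      assume "x \<in> CT" then show "x \<in> \<Union> CC" using K_self unfolding CC_def CT_def by auto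
    qed
  qed
qed

lemma PP_props: "finite PP" "\<And>c. c \<in> PP \<Longrightarrow> card c = 2 * (r + 1) \<and> finite c \<and> c \<noteq> {}"
  "\<And>c1 c2 x. c1 \<in> PP \<Longrightarrow> c2 \<in> PP \<Longrightarrow> x \<in> c1 \<Longrightarrow> x \<in> c2 \<Longrightarrow> c1 = c2"
  "\<Union> PP = CR"
proof -
  show "finite PP" unfolding PP_def CR_def by simp
  show "card c = 2 * (r + 1) \<and> finite c \<and> c \<noteq> {}" if cP: "c \<in> PP" for c
  proof -
    obtain v where v: "v < n" "\<not> ct v" "c = pr v" using cP unfolding PP_def CR_def by auto
    have "card (K v \<union> P v) = card (K v) + card (P v)"
      by (rule card_Un_disjoint[OF K_fin P_fin ncr_disj[OF v(1,2)]])
    then show ?thesis using v Kcard P_card pr_fin K_self unfolding pr_def by auto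
  qed
  show "c1 = c2" if h: "c1 \<in> PP" "c2 \<in> PP" "x \<in> c1" "x \<in> c2" for c1 c2 x
  proof -
    obtain v where v: "v < n" "\<not> ct v" "c1 = pr v" using h(1) unfolding PP_def CR_def by auto
    obtain w where w: "w < n" "\<not> ct w" "c2 = pr w" using h(2) unfolding PP_def CR_def by auto
    have "pr x = pr v" using pr_mem[OF v(1,2)] h(3) v(3) by simp
    moreover have "pr x = pr w" using pr_mem[OF w(1,2)] h(4) w(3) by simp
    ultimately show ?thesis using v w by simp
  qed
  show "\<Union> PP = CR"
  proof (rule Set.set_eqI)
    fix x show "x \<in> \<Union> PP \<longleftrightarrow> x \<in> CR"
    proof
      assume "x \<in> \<Union> PP"
      then obtain v where v: "v < n" "\<not> ct v" "x \<in> pr v" unfolding PP_def CR_def by auto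
      then show "x \<in> CR" using pr_mem[OF v] unfolding CR_def by auto
    next
      assume "x \<in> CR" then show "x \<in> \<Union> PP" using K_self unfolding PP_def CR_def pr_def by auto
    qed
  qed
qed

lemma card_MC: "card MC * (r + 1) = card CT"
proof -
  have "(r + 1) * card CC = card (\<Union> CC)"
    by (rule card_partition) (use CC_props in \<open>auto simp: CT_def\<close>)
  moreover have "card MC = card CC" unfolding MC_def
    by (rule card_image, rule Min_inj_disj) (use CC_props in auto)
  ultimately show ?thesis using CC_props(4) by (simp add: mult.commute)
qed

lemma card_MP: "card MP * (2 * (r + 1)) = card CR"
proof -
  have "(2 * (r + 1)) * card PP = card (\<Union> PP)"
    by (rule card_partition) (use PP_props in \<open>auto simp: CR_def\<close>)
  moreover have "card MP = card PP" unfolding MP_def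
    by (rule card_image, rule Min_inj_disj) (use PP_props in auto)
  ultimately show ?thesis using PP_props(4) by (simp add: mult.commute)
qed

lemma MC_mem: "v < n \<Longrightarrow> ct v \<Longrightarrow> Min (K v) \<in> MC"
  unfolding MC_def CC_def CT_def by auto
lemma MP_mem: "v < n \<Longrightarrow> \<not> ct v \<Longrightarrow> Min (pr v) \<in> MP"
  unfolding MP_def PP_def CR_def by auto
lemma MC_fin: "finite MC" using CC_props(1) unfolding MC_def by simp
lemma MP_fin: "finite MP" using PP_props(1) unfolding MP_def by simp

lemma phi_ct: "ct v \<Longrightarrow> phi v = (0, card {z \<in> MC. z < Min (K v)}, 0, card {u \<in> K v. u < v})"
  unfolding phi_def by simp
lemma phi_cr: "\<not> ct v \<Longrightarrow> phi v = (1, card {z \<in> MP. z < Min (pr v)}, if v \<in> L v then 0 else 1,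
                  if v \<in> L v then card {u \<in> L v. u < v} else card {u \<in> L v. u < mu v})"
  unfolding phi_def by simp

lemma mu_L: assumes v: "v < n" and c: "\<not> ct v" and nl: "v \<notin> L v" shows "mu v \<in> L v"
  using L_cases[OF v c] nl mu_P[OF v] by auto

lemma phi_VT: assumes v: "v < n" and cnt: "card MC = g" "card MP = h"
  shows "phi v \<in> VT (r + 1) g h"
proof (cases "ct v")
  case True
  have "card {z \<in> MC. z < Min (K v)} < g" using rk_lt[OF MC_fin MC_mem[OF v True]] cnt by simp
  moreover have "card {u \<in> K v. u < v} < r + 1" using rk_lt[OF K_fin K_self[OF v]] Kcard[OF v] by simp
  ultimately show ?thesis unfolding phi_ct[OF True] VT_mem by simp
next
  case False
  have "card {z \<in> MP. z < Min (pr v)} < h" using rk_lt[OF MP_fin MP_mem[OF v False]] cnt by simp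
  moreover have "(if v \<in> L v then card {u \<in> L v. u < v} else card {u \<in> L v. u < mu v}) < r + 1"
    using rk_lt[OF L_fin, of v "v"] rk_lt[OF L_fin mu_L[OF v False]] L_card[OF v False] by auto
  ultimately show ?thesis unfolding phi_cr[OF False] VT_mem by simp
qed

lemma MinK_eq: assumes v: "v < n" and w: "w < n" shows "Min (K v) = Min (K w) \<longleftrightarrow> K v = K w"
  using K_disj[OF K_Min[OF v]] K_Min[OF w] by auto

lemma Minpr_eq: assumes v: "v < n" and w: "w < n" and cv: "\<not> ct v" and cw: "\<not> ct w"
  shows "Min (pr v) = Min (pr w) \<longleftrightarrow> pr v = pr w"
proof
  assume e: "Min (pr v) = Min (pr w)"
  have 1: "pr (Min (pr v)) = pr v" using pr_mem[OF v cv pr_Min[OF v]] by blast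
  have 2: "pr (Min (pr w)) = pr w" using pr_mem[OF w cw pr_Min[OF w]] by blast
  show "pr v = pr w" using 1 2 e by metis
qed simp

lemma tC_eq: assumes v: "v < n" and w: "w < n" and cv: "ct v" and cw: "ct w"
  shows "card {z \<in> MC. z < Min (K v)} = card {z \<in> MC. z < Min (K w)} \<longleftrightarrow> K v = K w"
  using rk_inj[OF MC_fin MC_mem[OF v cv] MC_mem[OF w cw]] MinK_eq[OF v w] by auto

lemma tP_eq: assumes v: "v < n" and w: "w < n" and cv: "\<not> ct v" and cw: "\<not> ct w"
  shows "card {z \<in> MP. z < Min (pr v)} = card {z \<in> MP. z < Min (pr w)} \<longleftrightarrow> pr v = pr w"
  using rk_inj[OF MP_fin MP_mem[OF v cv] MP_mem[OF w cw]] Minpr_eq[OF v w cv cw] by auto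

lemma rk_eq: "finite S \<Longrightarrow> (x::nat) \<in> S \<Longrightarrow> y \<in> S \<Longrightarrow> card {u \<in> S. u < x} = card {u \<in> S. u < y} \<longleftrightarrow> x = y"
  using rk_inj by blast

lemma phi_inj: "inj_on phi {..<n}"
proof (rule inj_onI)
  fix v w assume v': "v \<in> {..<n}" and w': "w \<in> {..<n}" and e: "phi v = phi w"
  have v: "v < n" and w: "w < n" using v' w' by auto
  have cc: "ct v \<longleftrightarrow> ct w"
  proof (rule ccontr)
    assume "\<not> (ct v \<longleftrightarrow> ct w)"
    then have "fst (phi v) \<noteq> fst (phi w)" using ct_phi0 cr_phi1 by (cases "ct v") auto
    with e show False by simp
  qed
  show "v = w"
  proof (cases "ct v")
    case True
    then have cw: "ct w" using cc by simp
    have "K v = K w" using e tC_eq[OF v w True cw] unfolding phi_ct[OF True] phi_ct[OF cw] by simp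
    moreover have "card {u \<in> K v. u < v} = card {u \<in> K w. u < w}"
      using e unfolding phi_ct[OF True] phi_ct[OF cw] by simp
    ultimately show "v = w" using rk_inj[OF K_fin K_self[OF v], of w] K_self[OF w] by simp
  next
    case False
    then have cw: "\<not> ct w" using cc by simp
    have pr: "pr v = pr w" using e tP_eq[OF v w False cw] unfolding phi_cr[OF False] phi_cr[OF cw] by simp
    then have LL: "L v = L w" unfolding L_def by simp
    have side: "v \<in> L v \<longleftrightarrow> w \<in> L w" using e unfolding phi_cr[OF False] phi_cr[OF cw] by (auto split: if_splits)
    show "v = w"
    proof (cases "v \<in> L v")
      case True
      then have wL: "w \<in> L v" using side LL by simp
      have ce: "card {u \<in> L v. u < v} = card {u \<in> L v. u < w}"
        using e True side LL unfolding phi_cr[OF False] phi_cr[OF cw] by simp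
      show ?thesis by (rule rk_inj[OF L_fin True wL ce])
    next
      case nl: False
      then have nlw: "w \<notin> L w" using side by simp
      have m1: "mu v \<in> L v" by (rule mu_L[OF v False nl])
      have m2: "mu w \<in> L v" using mu_L[OF w cw nlw] LL by simp
      have ce: "card {u \<in> L v. u < mu v} = card {u \<in> L v. u < mu w}"
        using e nl nlw LL unfolding phi_cr[OF False] phi_cr[OF cw] by simp
      have mm: "mu v = mu w" by (rule rk_inj[OF L_fin m1 m2 ce])
      have "v = mu (mu v)" by (rule sym[OF cr_mumu[OF v False]])
      also have "\<dots> = mu (mu w)" by (simp only: mm)
      also have "\<dots> = w" by (rule cr_mumu[OF w cw])
      finally show ?thesis .
    qed
  qed
qed

lemma phi_adj: assumes v: "v < n" and w: "w < n"
  shows "adj X v w \<longleftrightarrow> adjT (phi v) (phi w)"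
proof (cases "ct v"; cases "ct w")
  assume cv: "ct v" and cw: "ct w"
  have "adjT (phi v) (phi w) \<longleftrightarrow> K v = K w \<and> card {u \<in> K v. u < v} \<noteq> card {u \<in> K w. u < w}"
    unfolding phi_ct[OF cv] phi_ct[OF cw] using tC_eq[OF v w cv cw] by simp
  also have "\<dots> \<longleftrightarrow> K v = K w \<and> v \<noteq> w"
    using rk_eq[OF K_fin K_self[OF v], of w] K_self[OF w] by auto
  also have "\<dots> \<longleftrightarrow> adj X v w" using ct_adj[OF v w cv] K_eq[OF v w] by auto
  finally show ?thesis by simp
next
  assume cv: "ct v" and cw: "\<not> ct w"
  have "\<not> adj X v w" using ct_adj[OF v w cv] ct_cls[OF v w] cv cw by auto
  moreover have "\<not> adjT (phi v) (phi w)" unfolding phi_ct[OF cv] phi_cr[OF cw] by simp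
  ultimately show ?thesis by simp
next
  assume cv: "\<not> ct v" and cw: "ct w"
  have "\<not> adj X w v" using ct_adj[OF w v cw] ct_cls[OF v w] cv cw by auto
  then have "\<not> adj X v w" using adj_sym by simp
  moreover have "\<not> adjT (phi v) (phi w)" unfolding phi_cr[OF cv] phi_ct[OF cw] by simp
  ultimately show ?thesis by simp
next
  assume cv: "\<not> ct v" and cw: "\<not> ct w"
  let ?sv = "if v \<in> L v then card {u \<in> L v. u < v} else card {u \<in> L v. u < mu v}"
  let ?sw = "if w \<in> L w then card {u \<in> L w. u < w} else card {u \<in> L w. u < mu w}"
  have A: "adjT (phi v) (phi w) \<longleftrightarrow> pr v = pr w \<and> ?sv \<noteq> ?sw \<and> (v \<in> L v \<longleftrightarrow> w \<notin> L w)"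
    unfolding phi_cr[OF cv] phi_cr[OF cw] using tP_eq[OF v w cv cw] by auto
  show ?thesis
  proof
    assume a: "adj X v w"
    have wP: "w \<in> P v" by (rule adj_P[OF a])
    then have prw: "pr w = pr v" using pr_mem[OF v cv] unfolding pr_def by auto
    have LL: "L w = L v" using L_pr[OF v cv] wP unfolding pr_def by auto
    have disj: "K v \<inter> P v = {}" by (rule ncr_disj[OF v cv])
    show "adjT (phi v) (phi w)"
    proof (cases "v \<in> L v")
      case True
      then have Lv: "L v = K v" using L_cases[OF v cv] by auto
      then have wn: "w \<notin> L w" using LL wP disj by auto
      have ne: "v \<noteq> mu w" using key[OF w v] a adj_sym by auto
      have m: "mu w \<in> L v" using mu_L[OF w cw wn] LL by simp
      have "card {u \<in> L v. u < v} \<noteq> card {u \<in> L v. u < mu w}"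
        using rk_eq[OF L_fin True m] ne by simp
      then show ?thesis unfolding A using prw True wn LL by simp
    next
      case False
      then have Lv: "L v = P v" using L_cases[OF v cv] by auto
      then have wi: "w \<in> L w" using LL wP by simp
      have ne: "w \<noteq> mu v" using key[OF v w] a by auto
      have m: "mu v \<in> L v" by (rule mu_L[OF v cv False])
      have wl: "w \<in> L v" using wi LL by simp
      have "card {u \<in> L v. u < mu v} \<noteq> card {u \<in> L v. u < w}"
        using rk_eq[OF L_fin m wl] ne by simp
      then show ?thesis unfolding A using prw False wi LL by simp
    qed
  next
    assume b: "adjT (phi v) (phi w)"
    then have prw: "pr v = pr w" and sd: "v \<in> L v \<longleftrightarrow> w \<notin> L w" and ss: "?sv \<noteq> ?sw" unfolding A by auto
    have LL: "L v = L w" using prw unfolding L_def by simp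
    show "adj X v w"
    proof (cases "v \<in> L v")
      case True
      then have wn: "w \<notin> L w" using sd by simp
      have Lv: "L v = K v" using L_cases[OF v cv] True by auto
      have Lw: "L w = P w" using L_cases[OF w cw] wn by auto
      have "card {u \<in> L v. u < v} \<noteq> card {u \<in> L v. u < mu w}" using ss True wn LL by simp
      then have "v \<noteq> mu w" by auto
      moreover have "v \<in> P w" using Lv Lw LL K_self[OF v] by simp
      ultimately have "adj X w v" using key[OF w v] by simp
      then show ?thesis using adj_sym by simp
    next
      case False
      then have wi: "w \<in> L w" using sd by simp
      have Lv: "L v = P v" using L_cases[OF v cv] False by auto
      have "card {u \<in> L v. u < mu v} \<noteq> card {u \<in> L v. u < w}" using ss False wi LL by simp
      then have "w \<noteq> mu v" by auto
      moreover have "w \<in> P v" using Lv LL wi by simp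
      ultimately show "adj X v w" using key[OF v w] by simp
    qed
  qed
qed

theorem H_Lab:
  assumes ct_cnt: "card CT = g * (r + 1)" and nn: "n = (g + 2 * h) * (r + 1)"
  shows "Lab (r + 1) X g h phi"
proof -
  have un: "CT \<union> CR = {..<n}" "CT \<inter> CR = {}" unfolding CT_def CR_def by auto
  have "card CT + card CR = n"
    using card_Un_disjoint[of CT CR] un by (simp add: CT_def CR_def)
  then have cr: "card CR = h * (2 * (r + 1))" using ct_cnt nn by (simp add: algebra_simps)
  have "card MC * (r + 1) = g * (r + 1)" using card_MC ct_cnt by simp
  then have g: "card MC = g" using mult_cancel2[of "card MC" "r + 1" g] by simp
  have "card MP * (2 * (r + 1)) = h * (2 * (r + 1))" using card_MP cr by simp
  then have h: "card MP = h" using mult_cancel2[of "card MP" "2 * (r + 1)" h] by simp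
  have sub: "phi ` {..<n} \<subseteq> VT (r + 1) g h" using phi_VT[OF _ g h] by auto
  have "card (phi ` {..<n}) = n" using card_image[OF phi_inj] by simp
  also have "n = card (VT (r + 1) g h)" using nn card_VT[of "r + 1" g h] by (simp add: algebra_simps)
  finally have "phi ` {..<n} = VT (r + 1) g h" using card_subset_eq[OF finite_VT sub] by simp
  then have "bij_betw phi {..<n} (VT (r + 1) g h)" using phi_inj by (simp add: bij_betw_def)
  then show ?thesis unfolding Lab_def using phi_adj by auto
qed

end


lemma sum_delta_gen: "j < (n::nat) \<Longrightarrow> (\<Sum>k<n. f k * (if k = j then c else 0)) = f j * (c::'a::comm_ring_1)"
  by (subst sum_single[of _ j]) auto
lemma sum_delta_gen': "i < (n::nat) \<Longrightarrow> (\<Sum>k<n. (if i = k then c else 0) * f k) = c * (f i::'a::comm_ring_1)"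
  by (subst sum_single[of _ i]) auto

lemma Nint_expand:
  assumes i: "i < nverts X" and j: "j < nverts X"
  shows "Nint X r i j = (\<Sum>k<nverts X. int (c2 X i k) * int (c2 X k j)) - int r ^ 2 * int (c2 X i j)
            - int (c2 X i j) + (if i = j then int r ^ 2 else 0)"
proof -
  let ?n = "nverts X"
  have "Nint X r i j = (\<Sum>k<?n. int (c2 X i k) * int (c2 X k j) - int (c2 X i k) * (if k = j then int r ^ 2 else 0)
       - ((if i = k then 1 else 0) * int (c2 X k j) - (if i = k then 1 else 0) * (if k = j then int r ^ 2 else 0)))"
    unfolding Nint_def by (intro sum.cong refl) (simp add: algebra_simps)
  also have "\<dots> = (\<Sum>k<?n. int (c2 X i k) * int (c2 X k j)) - (\<Sum>k<?n. int (c2 X i k) * (if k = j then int r ^ 2 else 0))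
       - ((\<Sum>k<?n. (if i = k then 1 else 0) * int (c2 X k j)) - (\<Sum>k<?n. (if i = k then 1 else 0) * (if k = j then int r ^ 2 else 0)))"
    by (simp only: sum_subtractf)
  also have "\<dots> = (\<Sum>k<?n. int (c2 X i k) * int (c2 X k j)) - int (c2 X i j) * int r ^ 2
       - (int (c2 X i j) - (if i = j then int r ^ 2 else 0))"
    by (simp only: sum_delta_gen[OF j] sum_delta_gen'[OF i]) simp
  finally show ?thesis by (simp add: algebra_simps)
qed

lemma Nint_sym: assumes S: "simple_graph X" and i: "i < nverts X" and j: "j < nverts X"
  shows "Nint X r i j = Nint X r j i"
proof -
  have "(\<Sum>k<nverts X. int (c2 X i k) * int (c2 X k j)) = (\<Sum>k<nverts X. int (c2 X j k) * int (c2 X k i))"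
    by (intro sum.cong refl) (simp add: c2_sym[OF S, of i] c2_sym[OF S, of k j for k])
  then show ?thesis unfolding Nint_expand[OF i j] Nint_expand[OF j i] using c2_sym[OF S, of i j] by auto
qed

lemma P2_N0:
  assumes S: "simple_graph X" and P: "P2 X r cls" and r: "r \<ge> 2" and i: "i < nverts X" and j: "j < nverts X"
  shows "Nint X r i j = 0"
proof -
  let ?n = "nverts X"
  let ?B = "\<lambda>i k. if cls i = cls k then (1::int) else 0"
  have c2e: "\<And>i j. i < ?n \<Longrightarrow> j < ?n \<Longrightarrow> c2 X i j = (if i = j then r else if cls i = cls j then r - 1 else 0)"
    using P unfolding P2_def by blast
  have cs: "\<And>i. i < ?n \<Longrightarrow> card {j. j < ?n \<and> cls j = cls i} = r + 1"
    using P unfolding P2_def by blast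
  have f1: "int (c2 X i k) - (if i = k then 1 else 0) = (int r - 1) * ?B i k" if k: "k < ?n" for k
    using c2e[OF i k] r by auto
  have f2: "int (c2 X k j) - (if k = j then int r ^ 2 else 0) = (int r - 1) * ?B k j - (if k = j then int r ^ 2 - 1 else 0)"
    if k: "k < ?n" for k
    using c2e[OF k j] r by auto
  have "Nint X r i j = (\<Sum>k<?n. (int r - 1)^2 * (?B i k * ?B k j) - ((int r - 1) * ?B i k) * (if k = j then int r ^ 2 - 1 else 0))"
    unfolding Nint_def by (intro sum.cong refl) (simp add: f1 f2 algebra_simps power2_eq_square)
  also have "\<dots> = (int r - 1)^2 * (\<Sum>k<?n. ?B i k * ?B k j) - ((int r - 1) * ?B i j) * (int r ^ 2 - 1)"
    by (simp only: sum_subtractf sum_delta_gen[OF j] sum_distrib_left[symmetric])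
  also have "(\<Sum>k<?n. ?B i k * ?B k j) = (if cls i = cls j then int (r + 1) else 0)"
  proof (cases "cls i = cls j")
    case True
    have "(\<Sum>k<?n. ?B i k * ?B k j) = (\<Sum>k<?n. if cls k = cls i then 1 else 0)"
      using True by (intro sum.cong refl) auto
    also have "\<dots> = int (card {k \<in> {..<?n}. cls k = cls i})" by (rule sum_ind) simp
    also have "{k \<in> {..<?n}. cls k = cls i} = {k. k < ?n \<and> cls k = cls i}" by auto
    finally show ?thesis using True cs[OF i] by simp
  next
    case False
    have "(\<Sum>k<?n. ?B i k * ?B k j) = (\<Sum>k<?n. 0)"
      using False by (intro sum.cong refl) auto
    then show ?thesis using False by simp
  qed
  finally show ?thesis by (cases "cls i = cls j") (simp_all add: power2_eq_square algebra_simps)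
qed

lemma N_to_P2:
  assumes S: "simple_graph X" and R: "\<forall>i<nverts X. degree X i = r" and r: "r \<ge> 2"
    and N0: "\<And>i j. i < nverts X \<Longrightarrow> j < nverts X \<Longrightarrow> Nint X r i j = 0"
  shows "P2 X r (\<lambda>i. {k. k < nverts X \<and> 0 < int (c2 X i k) - (if i = k then 1 else 0)})"
proof -
  let ?n = "nverts X"
  define M where "M i k = int (c2 X i k) - (if i = k then 1 else 0)" for i k
  define q where "q = int r - 1"
  have c2d: "\<And>i. i < ?n \<Longrightarrow> c2 X i i = r" using c2_diag[OF S] R by simp
  have sym: "\<And>i j. i < ?n \<Longrightarrow> j < ?n \<Longrightarrow> M i j = M j i" unfolding M_def using c2_sym[OF S] by auto
  have nonneg: "\<And>i j. i < ?n \<Longrightarrow> j < ?n \<Longrightarrow> M i j \<ge> 0" unfolding M_def using c2d r by auto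
  have diag: "\<And>i. i < ?n \<Longrightarrow> M i i = q" unfolding M_def q_def using c2d by simp
  have rows: "(\<Sum>k<?n. M i k) = q * (q + 2)" if i: "i < ?n" for i
  proof -
    have "(\<Sum>k<?n. M i k) = (\<Sum>k<?n. int (c2 X i k)) - (\<Sum>k<?n. (if i = k then 1 else 0) * (1::int))"
      unfolding M_def by (simp add: sum_subtractf)
    also have "\<dots> = int (r * r) - 1" using c2_rowsum[OF S R i] sum_delta_gen'[OF i, of 1 "\<lambda>_. 1::int"]
      by (simp del: of_nat_mult add: of_nat_sum[symmetric])
    finally show ?thesis unfolding q_def by (simp add: algebra_simps)
  qed
  have sq: "(\<Sum>k<?n. M i k * M k j) = q * (q + 2) * M i j" if i: "i < ?n" and j: "j < ?n" for i j
  proof -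
    have "Nint X r i j = (\<Sum>k<?n. M i k * M k j - M i k * (if k = j then int r ^ 2 - 1 else 0))"
      unfolding Nint_def M_def by (intro sum.cong refl) (simp add: algebra_simps)
    also have "\<dots> = (\<Sum>k<?n. M i k * M k j) - M i j * (int r ^ 2 - 1)"
      by (simp only: sum_subtractf sum_delta_gen[OF j])
    finally have "(\<Sum>k<?n. M i k * M k j) = M i j * (int r ^ 2 - 1)" using N0[OF i j] by simp
    then show ?thesis unfolding q_def by (simp add: power2_eq_square algebra_simps)
  qed
  have q1: "q \<ge> 1" unfolding q_def using r by simp
  have ms1: "\<And>i j. i < ?n \<Longrightarrow> j < ?n \<Longrightarrow> M i j = 0 \<or> M i j = q"
    apply (rule M_struct(1)[where M=M and n="nverts X" and q=q])
         apply (rule sym; assumption)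
        apply (rule nonneg; assumption)
       apply (rule diag; assumption)
      apply (rule rows; assumption)
     apply (rule sq; assumption)
    by (rule q1)
  have ms2: "\<And>i j k. i < ?n \<Longrightarrow> j < ?n \<Longrightarrow> k < ?n \<Longrightarrow> M i j > 0 \<Longrightarrow> M j k > 0 \<Longrightarrow> M i k > 0"
    apply (rule M_struct(2)[where M=M and n="nverts X" and q=q])
         apply (rule sym; assumption)
        apply (rule nonneg; assumption)
       apply (rule diag; assumption)
      apply (rule rows; assumption)
     apply (rule sq; assumption)
    by (rule q1)
  have ms3: "\<And>i. i < ?n \<Longrightarrow> int (card {k. k < ?n \<and> M i k > 0}) = q + 2"
    apply (rule M_struct(3)[where M=M and n="nverts X" and q=q])
         apply (rule sym; assumption)
        apply (rule nonneg; assumption)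
       apply (rule diag; assumption)
      apply (rule rows; assumption)
     apply (rule sq; assumption)
    by (rule q1)
  define cl where "cl i = {k. k < ?n \<and> 0 < M i k}" for i
  have clq: "cl i = cl j \<longleftrightarrow> 0 < M i j" if i: "i < ?n" and j: "j < ?n" for i j
  proof
    assume "cl i = cl j"
    moreover have "j \<in> cl j" unfolding cl_def using j diag[OF j] q1 by simp
    ultimately show "0 < M i j" unfolding cl_def by auto
  next
    assume p: "0 < M i j"
    have p': "0 < M j i" using p sym[OF i j] by simp
    show "cl i = cl j" unfolding cl_def using ms2[OF i j _ p] ms2[OF j i _ p'] by auto
  qed
  have "P2 X r cl"
    unfolding P2_def
  proof (intro conjI allI impI)
    fix i j assume i: "i < ?n" and j: "j < ?n"
    show "c2 X i j = (if i = j then r else if cl i = cl j then r - 1 else 0)"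
    proof (cases "i = j")
      case True then show ?thesis using c2d i by simp
    next
      case False
      then have Mij: "M i j = int (c2 X i j)" unfolding M_def by simp
      show ?thesis
      proof (cases "0 < M i j")
        case True
        then have "M i j = q" using ms1[OF i j] by auto
        then show ?thesis using False True clq[OF i j] Mij r unfolding q_def by auto
      next
        case nt: False
        then have "M i j = 0" using nonneg[OF i j] by simp
        then show ?thesis using False nt clq[OF i j] Mij by auto
      qed
    qed
  next
    fix i assume i: "i < ?n"
    have "{j. j < ?n \<and> cl j = cl i} = {k. k < ?n \<and> 0 < M i k}"
      using clq[OF i] sym by auto
    then have "int (card {j. j < ?n \<and> cl j = cl i}) = q + 2" using ms3[OF i] by simp
    then show "card {j. j < ?n \<and> cl j = cl i} = r + 1" unfolding q_def by simp
  qed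
  then show ?thesis unfolding cl_def M_def .
qed

lemma Lab_iso:
  assumes LH: "Lab m H a b \<phi>" and LG: "Lab m G a b \<psi>"
  shows "isomorphic H G"
proof -
  have bH: "bij_betw \<phi> {..<nverts H} (VT m a b)" and aH: "\<And>v w. v < nverts H \<Longrightarrow> w < nverts H \<Longrightarrow> adj H v w = adjT (\<phi> v) (\<phi> w)"
    using LH unfolding Lab_def by auto
  have bG: "bij_betw \<psi> {..<nverts G} (VT m a b)" and aG: "\<And>v w. v < nverts G \<Longrightarrow> w < nverts G \<Longrightarrow> adj G v w = adjT (\<psi> v) (\<psi> w)"
    using LG unfolding Lab_def by auto
  define f where "f = inv_into {..<nverts G} \<psi> \<circ> \<phi>"
  have bf: "bij_betw f {..<nverts H} {..<nverts G}"
    unfolding f_def by (rule bij_betw_trans[OF bH bij_betw_inv_into[OF bG]])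
  have fl: "f v < nverts G" if "v < nverts H" for v
    using bij_betw_apply[OF bf] that by auto
  have pf: "\<psi> (f v) = \<phi> v" if "v < nverts H" for v
  proof -
    have "\<phi> v \<in> VT m a b" using bij_betw_apply[OF bH] that by auto
    then show ?thesis unfolding f_def using bij_betw_inv_into_right[OF bG] by simp
  qed
  show ?thesis unfolding isomorphic_def
  proof (intro exI conjI allI impI)
    show "bij_betw f {0..<nverts H} {0..<nverts G}" using bf by (simp add: atLeast0LessThan)
  next
    fix i j assume i: "i < nverts H" and j: "j < nverts H"
    show "adj H i j = adj G (f i) (f j)"
      using aH[OF i j] aG[OF fl[OF i] fl[OF j]] pf[OF i] pf[OF j] by simp
  qed
qed

lemma sumsq_zero:
  fixes F :: "nat \<Rightarrow> nat \<Rightarrow> int"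
  assumes "(\<Sum>i<n. \<Sum>k<n. F i k * F i k) = 0" "i < n" "k < n"
  shows "F i k = 0"
proof -
  have inner: "\<forall>i\<in>{..<n}. (\<Sum>k<n. F i k * F i k) = 0"
    using assms(1) by (subst sum_nonneg_eq_0_iff[symmetric]) (auto intro: sum_nonneg)
  then have "(\<Sum>k<n. F i k * F i k) = 0" using assms(2) by blast
  then have "\<forall>k\<in>{..<n}. F i k * F i k = 0"
    by (subst sum_nonneg_eq_0_iff[symmetric]) auto
  then show ?thesis using assms(3) by simp
qed

theorem mainTheorem5:
  fixes r g h :: nat
  assumes "r \<ge> 2" and "g + h \<ge> 1"
  shows "DQS (disjoint_union (copies g (complete_graph (r + 1)))
                             (copies h (crown_graph (r + 1))))"
proof -
  have r2: "r \<ge> 2" by fact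
  define G where "G = disjoint_union (copies g (complete_graph (r + 1))) (copies h (crown_graph (r + 1)))"
  have SG: "simple_graph G" unfolding G_def by (rule G_simple)
  obtain \<phi>G where LG: "Lab (r + 1) G g h \<phi>G" using G_Lab unfolding G_def by blast
  have P2G: "P2 G r (clsT \<circ> \<phi>G)" and scG: "(\<Sum>i<nverts G. sc G (clsT \<circ> \<phi>G) i) = r * (g * (r + 1))"
    using Lab_P2[OF LG r2] by auto
  have bijG: "bij_betw \<phi>G {..<nverts G} (VT (r + 1) g h)" using LG unfolding Lab_def by auto
  have nG: "nverts G = (g + 2 * h) * (r + 1)"
    using bij_betw_same_card[OF bijG] card_VT[of "r + 1" g h] by (simp add: algebra_simps)
  interpret pG: p2g G r "clsT \<circ> \<phi>G" by unfold_locales (rule SG, rule r2, rule P2G)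
  have degG: "\<forall>i<nverts G. degree G i = r" using pG.deg by auto
  show ?thesis unfolding DQS_def G_def[symmetric]
  proof (intro allI impI)
    fix H assume SH: "simple_graph H" and sp: "spec_Q H = spec_Q G"
    let ?n = "nverts G"
    have nH: "nverts H = ?n" by (rule spec_tr(1)[OF sp])
    have trs: "\<And>as. tr (pf (signless_laplacian H) ?n as) = tr (pf (signless_laplacian G) ?n as)"
      using spec_tr(2)[OF sp] nH by simp
    have s1: "(\<Sum>i<?n. degree H i) = r * ?n"
    proof -
      have "(of_nat (\<Sum>i<?n. degree H i) :: complex) = of_nat (\<Sum>i<?n. degree G i)"
        using tr_pf0[OF SH] tr_pf0[OF SG] trs[of "[0]"] nH by simp
      then have "(\<Sum>i<?n. degree H i) = (\<Sum>i<?n. degree G i)" by (simp only: of_nat_eq_iff)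
      also have "\<dots> = (\<Sum>i<?n. r)" using degG by simp
      finally show ?thesis by simp
    qed
    have s2: "(\<Sum>i<?n. degree H i ^ 2 + degree H i) = (r ^ 2 + r) * ?n"
    proof -
      have "(of_nat (\<Sum>i<?n. degree H i ^ 2 + degree H i) :: complex) = of_nat (\<Sum>i<?n. degree G i ^ 2 + degree G i)"
        using tr_pf00[OF SH] tr_pf00[OF SG] trs[of "[0, 0]"] nH by simp
      then have "(\<Sum>i<?n. degree H i ^ 2 + degree H i) = (\<Sum>i<?n. degree G i ^ 2 + degree G i)" by (simp only: of_nat_eq_iff)
      also have "\<dots> = (\<Sum>i<?n. r ^ 2 + r)" using degG by simp
      finally show ?thesis by simp
    qed
    have RH: "\<forall>i<nverts H. degree H i = r" using regular_from_sums[OF s1 s2] nH by simp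
    have NG0: "\<And>i j. i < ?n \<Longrightarrow> j < ?n \<Longrightarrow> Nint G r i j = 0" by (rule P2_N0[OF SG P2G r2])
    have "(of_int (\<Sum>i<?n. \<Sum>k<?n. Nint H r i k * Nint H r k i) :: complex) = of_int (\<Sum>i<?n. \<Sum>k<?n. Nint G r i k * Nint G r k i)"
      using tr_pfNN[OF SH RH] tr_pfNN[OF SG degG] trs[of "Nl r @ Nl r"] nH by simp
    then have "(\<Sum>i<?n. \<Sum>k<?n. Nint H r i k * Nint H r k i) = (\<Sum>i<?n. \<Sum>k<?n. Nint G r i k * Nint G r k i)"
      by (simp only: of_int_eq_iff)
    also have "\<dots> = 0" using NG0 by simp
    finally have z: "(\<Sum>i<?n. \<Sum>k<?n. Nint H r i k * Nint H r k i) = 0" .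
    have "(\<Sum>i<?n. \<Sum>k<?n. Nint H r i k * Nint H r i k) = (\<Sum>i<?n. \<Sum>k<?n. Nint H r i k * Nint H r k i)"
      using Nint_sym[OF SH] nH by (intro sum.cong refl) auto
    then have z2: "(\<Sum>i<?n. \<Sum>k<?n. Nint H r i k * Nint H r i k) = 0" using z by simp
    have N0: "\<And>i j. i < nverts H \<Longrightarrow> j < nverts H \<Longrightarrow> Nint H r i j = 0"
      using sumsq_zero[OF z2] nH by simp
    define clsH where "clsH = (\<lambda>i. {k. k < nverts H \<and> 0 < int (c2 H i k) - (if i = k then 1 else 0)})"
    have P2H: "P2 H r clsH" unfolding clsH_def by (rule N_to_P2[OF SH RH r2 N0])
    interpret pH: p2g H r clsH by unfold_locales (rule SH, rule r2, rule P2H)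
    have "(of_nat (\<Sum>i<?n. \<Sum>k<?n. if adj H i k then c2 H k i else 0) :: complex) =
          of_nat (\<Sum>i<?n. \<Sum>k<?n. if adj G i k then c2 G k i else 0)"
      using tr_pf3[OF SH RH] tr_pf3[OF SG degG] trs[of "[of_nat r, of_nat r, of_nat r]"] nH by simp
    then have eq: "(\<Sum>i<?n. \<Sum>k<?n. if adj H i k then c2 H k i else 0) = (\<Sum>i<?n. \<Sum>k<?n. if adj G i k then c2 G k i else 0)"
      by (simp only: of_nat_eq_iff)
    have t1: "(\<Sum>i<?n. \<Sum>k<?n. if adj H i k then c2 H k i else 0) = (r - 1) * (\<Sum>i<?n. sc H clsH i)"
      using pH.tri_sum nH by simp
    have t2: "(\<Sum>i<?n. \<Sum>k<?n. if adj G i k then c2 G k i else 0) = (r - 1) * (r * (g * (r + 1)))"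
      using pG.tri_sum scG by simp
    have "(r - 1) * (\<Sum>i<?n. sc H clsH i) = (r - 1) * (r * (g * (r + 1)))"
      by (simp only: t1[symmetric] eq t2)
    then have scH: "(\<Sum>i<?n. sc H clsH i) = r * (g * (r + 1))" using r2 by simp
    have "(\<Sum>i<?n. sc H clsH i) = (\<Sum>i<?n. if pH.ct i then r else 0)"
      using pH.sc_val nH by (intro sum.cong refl) auto
    also have "\<dots> = r * card {i. i < ?n \<and> pH.ct i}" by (rule sum_if_const)
    finally have e: "(\<Sum>i<?n. sc H clsH i) = r * card {i. i < ?n \<and> pH.ct i}" .
    have m: "r * card {i. i < ?n \<and> pH.ct i} = r * (g * (r + 1))" by (simp only: e[symmetric] scH)
    have c: "card {i. i < ?n \<and> pH.ct i} = g * (r + 1)"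
      using m r2 mult_cancel1[of r "card {i. i < ?n \<and> pH.ct i}" "g * (r + 1)"] by linarith
    have "pH.CT = {i. i < ?n \<and> pH.ct i}" unfolding pH.CT_def using nH by simp
    then have ctc: "card pH.CT = g * (r + 1)" using c by simp
    have LH: "Lab (r + 1) H g h pH.phi" by (rule pH.H_Lab[OF ctc]) (use nH nG in simp)
    show "isomorphic H G" by (rule Lab_iso[OF LH LG])
  qed
qed


end
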